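(* Let $m$ be Lebesgue measure on $\mathbb{T}=[-\pi,\pi]$, let $(\phi_n)$ be the real trigonometric system, and let $\mathcal{F}(f)=\big(\int_{\mathbb{T}}f\phi_n\,dm\big)_n$ be the Fourier operator. Fix $1<r\le2$, $r\le p<\infty$, $1<q\le\infty$, and let $T\colon L^p(m)\to\ell^q$ be a nontrivial continuous linear operator. Write $r'$ for the conjugate exponent of $r$, $s=s_{r'q}$, and $s'$ for the conjugate exponent of $s$. The following are equivalent: (a) There exists $g\in\ell^{s}$ such that $T(f)=g\,\mathcal{F}(f)$ (coordinatewise product) for all $f\in L^p(m)$, where $\mathcal{F}$ is regarded as the operator $L^r(m)\to\ell^{r'}$ and $f\in L^p(m)\subset L^r(m)$. (b) $T(\phi_n)_i=0$ for all $i\ne n$, and $\big(T(\phi_i)_i\big)_i\in\ell^{s}$. (c) There exists $C>0$ such that $$\sum_{i=1}^n\sum_{j=1}^m r_{ij}\,T(\phi_j)_i\le C\Big(\sum_{i=1}^{\min\{n,m\}}|r_{ii}|^{s'}\Big)^{1/s'}$$ for all $n,m\in\mathbb{N}$ and all real $(r_{ij})$ with $|r_{ij}|\le1$. Moreover, if $r'\le q$, then (a)–(c) are equivalent to: (d) There exists $C>0$ such that for all $n,m\in\mathbb{N}$ and all real $(r_j)$ with $|r_j|\le1$: $\sum_{j=1}^m r_jT(\phi_j)_n\le C|r_n|$ if $n\le m$, and $\sum_{j=1}^m r_jT(\phi_j)_n\le 0$ if $n>m$.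
   Context: The real trigonometric system on $[-\pi,\pi]$: $\phi_1=1/\sqrt{2\pi}$, $\phi_{2k}(x)=\cos(kx)/\sqrt{\pi}$, $\phi_{2k+1}(x)=\sin(kx)/\sqrt{\pi}$. By the Hausdorff–Young inequality, $\mathcal{F}\colon L^r(m)\to\ell^{r'}$ is continuous for $1<r\le2$. For exponents $1\le a,b\le\infty$, $s_{ab}=\frac{ab}{a-b}$ if $1\le b<a<\infty$; $s_{ab}=b$ if $1\le b<a=\infty$; $s_{ab}=\infty$ if $1\le a\le b\le\infty$. $T(\phi_j)_i$ denotes the $i$-th coordinate of $T(\phi_j)$. *)

theory Defs
  imports "HOL-Analysis.Analysis"
begin

definition torus :: "real measure" where
  "torus = lebesgue_on {-pi..pi}"

text \<open>Real trigonometric system, indexed from 0 (index i here = index i+1 in the paper):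
  trig 0 = 1/sqrt(2 pi), trig (2k-1) = cos(kx)/sqrt pi, trig (2k) = sin(kx)/sqrt pi (k >= 1).\<close>
definition trig :: "nat \<Rightarrow> real \<Rightarrow> real" where
  "trig n x = (if n = 0 then 1 / sqrt (2 * pi)
              else if odd n then cos (real ((n + 1) div 2) * x) / sqrt pi
              else sin (real (n div 2) * x) / sqrt pi)"

definition fourier :: "(real \<Rightarrow> real) \<Rightarrow> nat \<Rightarrow> real" where
  "fourier f n = integral\<^sup>L torus (\<lambda>x. f x * trig n x)"

definition Lp :: "real \<Rightarrow> (real \<Rightarrow> real) set" where
  "Lp p = {f. f \<in> borel_measurable torus \<and> integrable torus (\<lambda>x. \<bar>f x\<bar> powr p)}"

definition Lp_norm :: "real \<Rightarrow> (real \<Rightarrow> real) \<Rightarrow> real" where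
  "Lp_norm p f = (integral\<^sup>L torus (\<lambda>x. \<bar>f x\<bar> powr p)) powr (1 / p)"

definition lspace :: "ereal \<Rightarrow> (nat \<Rightarrow> real) set" where
  "lspace q = (if q = \<infinity> then {x. \<exists>B. \<forall>n. \<bar>x n\<bar> \<le> B}
               else {x. summable (\<lambda>n. \<bar>x n\<bar> powr real_of_ereal q)})"

definition lnorm :: "ereal \<Rightarrow> (nat \<Rightarrow> real) \<Rightarrow> real" where
  "lnorm q x = (if q = \<infinity> then (SUP n. \<bar>x n\<bar>)
               else (\<Sum>n. \<bar>x n\<bar> powr real_of_ereal q) powr (1 / real_of_ereal q))"

definition conj_exp :: "ereal \<Rightarrow> ereal" where
  "conj_exp a = (if a = \<infinity> then 1 else if a = 1 then \<infinity>
                 else ereal (real_of_ereal a / (real_of_ereal a - 1)))"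

definition s_exp :: "ereal \<Rightarrow> ereal \<Rightarrow> ereal" where
  "s_exp a b = (if 1 \<le> b \<and> b < a \<and> a < \<infinity> then
                   ereal (real_of_ereal a * real_of_ereal b / (real_of_ereal a - real_of_ereal b))
                else if 1 \<le> b \<and> b < a \<and> a = \<infinity> then b
                else \<infinity>)"

end

theory Submission
  imports Defs
begin


lemma sin_int_pi: "sin (real_of_int k * pi) = 0"
  by (metis sin_times_pi_eq_0 Ints_of_int)

lemma int_cos_hk: "((\<lambda>t. cos (real_of_int k * t)) has_integral (if k = 0 then 2*pi else 0)) {-pi..pi}"
proof (cases "k = 0")
  case True
  then show ?thesis using has_integral_const_real[of "1::real" "-pi" pi] by (simp add: real_scaleR_def)
next
  case False
  have "((\<lambda>t. cos (real_of_int k * t)) has_integral (sin (real_of_int k * pi)/k - sin (real_of_int k * (-pi))/k)) {-pi..pi}"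
    apply (rule fundamental_theorem_of_calculus)
     apply simp
    using False apply (auto intro!: derivative_eq_intros simp: has_real_derivative_iff_has_vector_derivative[symmetric])
    done
  then show ?thesis using False by (simp add: sin_int_pi)
qed

lemma int_sin_hk: "((\<lambda>t. sin (real_of_int k * t)) has_integral 0) {-pi..pi}"
proof (cases "k = 0")
  case True
  then show ?thesis by simp
next
  case False
  have "((\<lambda>t. sin (real_of_int k * t)) has_integral (- cos (real_of_int k * pi)/k - (- cos (real_of_int k * (-pi))/k))) {-pi..pi}"
    apply (rule fundamental_theorem_of_calculus)
     apply simp
    using False apply (auto intro!: derivative_eq_intros simp: has_real_derivative_iff_has_vector_derivative[symmetric])
    done
  then show ?thesis by simp
qed

lemma cc_hk: "((\<lambda>t. cos (real_of_int a * t) * cos (real_of_int b * t)) has_integral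
   ((if a - b = 0 then 2*pi else 0) + (if a + b = 0 then 2*pi else 0)) / 2) {-pi..pi}"
proof -
  have e: "cos (real_of_int a * t) * cos (real_of_int b * t) =
     (cos (real_of_int (a-b) * t) + cos (real_of_int (a+b) * t)) / 2" for t
    by (simp add: cos_times_cos algebra_simps)
  show ?thesis unfolding e
    by (intro has_integral_divide has_integral_add int_cos_hk)
qed

lemma ss_hk: "((\<lambda>t. sin (real_of_int a * t) * sin (real_of_int b * t)) has_integral
   ((if a - b = 0 then 2*pi else 0) - (if a + b = 0 then 2*pi else 0)) / 2) {-pi..pi}"
proof -
  have e: "sin (real_of_int a * t) * sin (real_of_int b * t) =
     (cos (real_of_int (a-b) * t) - cos (real_of_int (a+b) * t)) / 2" for t
    by (simp add: sin_times_sin algebra_simps)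
  show ?thesis unfolding e
    by (intro has_integral_divide has_integral_diff int_cos_hk)
qed

lemma sc_hk: "((\<lambda>t. sin (real_of_int a * t) * cos (real_of_int b * t)) has_integral 0) {-pi..pi}"
proof -
  have e: "sin (real_of_int a * t) * cos (real_of_int b * t) =
     (sin (real_of_int (a+b) * t) + sin (real_of_int (a-b) * t)) / 2" for t
    by (simp add: sin_add sin_diff algebra_simps)
  show ?thesis unfolding e
    using has_integral_divide[OF has_integral_add[OF int_sin_hk int_sin_hk], of "a+b" "a-b" 2] by simp
qed

definition kk :: "nat \<Rightarrow> nat" where "kk n = (n + 1) div 2"
definition bas :: "nat \<Rightarrow> real \<Rightarrow> real" where
  "bas n x = (if even n \<and> n > 0 then sin (real (kk n) * x) else cos (real (kk n) * x))"
definition ww :: "nat \<Rightarrow> real" where "ww n = (if n = 0 then 1 / sqrt (2*pi) else 1 / sqrt pi)"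

lemma trig_bas: "trig n x = ww n * bas n x"
  unfolding trig_def ww_def bas_def kk_def
  by (auto elim!: oddE evenE)

lemma bas_hk: "((\<lambda>t. bas n t * bas i t) has_integral (if n = i then (if n = 0 then 2*pi else pi) else 0)) {-pi..pi}"
proof -
  have kinj: "kk n = kk i \<Longrightarrow> (even n \<and> n > 0) = (even i \<and> i > 0) \<Longrightarrow> n = i"
    unfolding kk_def by presburger
  have neq: "n \<noteq> i \<Longrightarrow> (even n \<and> n > 0) = (even i \<and> i > 0) \<Longrightarrow> kk n \<noteq> kk i"
    using kinj by blast
  have k0: "kk n = 0 \<longleftrightarrow> n = 0" for n unfolding kk_def by auto
  consider "even n \<and> n > 0" "even i \<and> i > 0" | "\<not>(even n \<and> n > 0)" "\<not>(even i \<and> i > 0)"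
    | "even n \<and> n > 0" "\<not>(even i \<and> i > 0)" | "\<not>(even n \<and> n > 0)" "even i \<and> i > 0" by blast
  then show ?thesis
  proof cases
    case 1
    then show ?thesis using ss_hk[of "int (kk n)" "int (kk i)"] neq k0[of n] k0[of i]
      by (cases "n = i") (auto simp: bas_def)
  next
    case 2
    then show ?thesis using cc_hk[of "int (kk n)" "int (kk i)"] neq k0[of n] k0[of i]
      by (cases "n = i") (auto simp: bas_def)
  next
    case 3
    then show ?thesis using sc_hk[of "int (kk n)" "int (kk i)"]
      by (auto simp: bas_def)
  next
    case 4
    then show ?thesis using sc_hk[of "int (kk i)" "int (kk n)"]
      by (auto simp: bas_def mult.commute)
  qed
qed

lemma continuous_trig: "continuous_on S (trig n)"
  by (cases "n = 0"; cases "odd n") (auto simp: trig_def intro!: continuous_intros)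

lemma fourier_trig: "fourier (trig n) i = (if n = i then 1 else 0)"
proof -
  have cont: "continuous_on {-pi..pi} (\<lambda>x. trig n x * trig i x)"
    by (intro continuous_intros continuous_trig)
  have "fourier (trig n) i = integral {-pi..pi} (\<lambda>x. trig n x * trig i x)"
    unfolding fourier_def torus_def
    by (rule lebesgue_integral_eq_integral[OF continuous_imp_integrable_real[OF cont]]) simp
  also have "\<dots> = ww n * ww i * (if n = i then (if n = 0 then 2*pi else pi) else 0)"
  proof (rule integral_unique)
    have "((\<lambda>t. (ww n * ww i) * (bas n t * bas i t)) has_integral (ww n * ww i) * (if n = i then (if n = 0 then 2*pi else pi) else 0)) {-pi..pi}"
      by (rule has_integral_mult_right[OF bas_hk])
    then show "((\<lambda>x. trig n x * trig i x) has_integral ww n * ww i * (if n = i then (if n = 0 then 2*pi else pi) else 0)) {-pi..pi}"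
      by (simp add: trig_bas mult_ac)
  qed
  also have "\<dots> = (if n = i then 1 else 0)"
    by (auto simp: ww_def power_divide)
  finally show ?thesis .
qed



inductive_set TP :: "(real \<Rightarrow> real) set" where
  TP_trig: "trig k \<in> TP"
| TP_add: "f \<in> TP \<Longrightarrow> g \<in> TP \<Longrightarrow> (\<lambda>x. f x + g x) \<in> TP"
| TP_scale: "f \<in> TP \<Longrightarrow> (\<lambda>x. c * f x) \<in> TP"

lemma TP_const: "(\<lambda>x. c) \<in> TP"
proof -
  have "(\<lambda>x. (c * sqrt (2*pi)) * trig 0 x) \<in> TP" by (intro TP_scale TP_trig)
  moreover have "(\<lambda>x. (c * sqrt (2*pi)) * trig 0 x) = (\<lambda>x. c)"
    by (auto simp: trig_def)
  ultimately show ?thesis by simp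
qed

lemma TP_cos_nat: "(\<lambda>t. cos (real k * t)) \<in> TP"
proof (cases "k = 0")
  case True then show ?thesis using TP_const[of 1] by simp
next
  case False
  have "(\<lambda>x. sqrt pi * trig (2*k - 1) x) \<in> TP" by (intro TP_scale TP_trig)
  moreover have "(\<lambda>x. sqrt pi * trig (2*k - 1) x) = (\<lambda>t. cos (real k * t))"
  proof
    fix x
    have a: "2*k - 1 \<noteq> 0" "odd (2*k - 1)" "(2*k - 1 + 1) div 2 = k" using False by presburger+
    show "sqrt pi * trig (2*k - 1) x = cos (real k * x)"
      unfolding trig_def using a by simp
  qed
  ultimately show ?thesis by simp
qed

lemma TP_sin_nat: "(\<lambda>t. sin (real k * t)) \<in> TP"
proof (cases "k = 0")
  case True then show ?thesis using TP_const[of 0] by simp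
next
  case False
  have "(\<lambda>x. sqrt pi * trig (2*k) x) \<in> TP" by (intro TP_scale TP_trig)
  moreover have "(\<lambda>x. sqrt pi * trig (2*k) x) = (\<lambda>t. sin (real k * t))"
  proof
    fix x
    have a: "2*k \<noteq> 0" "\<not> odd (2*k)" "(2*k) div 2 = k" using False by presburger+
    show "sqrt pi * trig (2*k) x = sin (real k * x)"
      unfolding trig_def using a by simp
  qed
  ultimately show ?thesis by simp
qed

lemma TP_cos_int: "(\<lambda>t. cos (real_of_int z * t)) \<in> TP"
proof (cases "z \<ge> 0")
  case True
  then obtain k where "z = int k" using nonneg_int_cases by blast
  then show ?thesis using TP_cos_nat[of k] by simp
next
  case False
  then obtain k where "z = - int k" by (metis add.inverse_inverse nat_0_le neg_0_le_iff_le nle_le)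
  then show ?thesis using TP_cos_nat[of k] by simp
qed

lemma TP_sin_int: "(\<lambda>t. sin (real_of_int z * t)) \<in> TP"
proof (cases "z \<ge> 0")
  case True
  then obtain k where "z = int k" using nonneg_int_cases by blast
  then show ?thesis using TP_sin_nat[of k] by simp
next
  case False
  then obtain k where e: "z = - int k" by (metis add.inverse_inverse nat_0_le neg_0_le_iff_le nle_le)
  have "(\<lambda>t. (-1) * sin (real k * t)) \<in> TP" by (intro TP_scale TP_sin_nat)
  then show ?thesis by (simp add: e)
qed

lemma TP_diff: "f \<in> TP \<Longrightarrow> g \<in> TP \<Longrightarrow> (\<lambda>x. f x - g x) \<in> TP"
  using TP_add[OF _ TP_scale[of g "-1"], of f] by simp

lemma TP_div: "f \<in> TP \<Longrightarrow> (\<lambda>x. f x / c) \<in> TP"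
  using TP_scale[of f "1/c"] by simp

lemma TP_bas_mult: "(\<lambda>x. bas n x * bas m x) \<in> TP"
proof -
  have cc: "(\<lambda>t. cos (real a * t) * cos (real b * t)) \<in> TP" for a b
  proof -
    have "(\<lambda>t. (cos (real_of_int (int a - int b) * t) + cos (real_of_int (int a + int b) * t)) / 2) \<in> TP"
      by (intro TP_div TP_add TP_cos_int)
    moreover have "(\<lambda>t. (cos (real_of_int (int a - int b) * t) + cos (real_of_int (int a + int b) * t)) / 2)
       = (\<lambda>t. cos (real a * t) * cos (real b * t))"
      by (auto simp: cos_times_cos algebra_simps)
    ultimately show ?thesis by simp
  qed
  have ss: "(\<lambda>t. sin (real a * t) * sin (real b * t)) \<in> TP" for a b
  proof -
    have "(\<lambda>t. (cos (real_of_int (int a - int b) * t) - cos (real_of_int (int a + int b) * t)) / 2) \<in> TP"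
      by (intro TP_div TP_diff TP_cos_int)
    moreover have "(\<lambda>t. (cos (real_of_int (int a - int b) * t) - cos (real_of_int (int a + int b) * t)) / 2)
       = (\<lambda>t. sin (real a * t) * sin (real b * t))"
      by (auto simp: sin_times_sin algebra_simps)
    ultimately show ?thesis by simp
  qed
  have sc: "(\<lambda>t. sin (real a * t) * cos (real b * t)) \<in> TP" for a b
  proof -
    have "(\<lambda>t. (sin (real_of_int (int a + int b) * t) + sin (real_of_int (int a - int b) * t)) / 2) \<in> TP"
      by (intro TP_div TP_add TP_sin_int)
    moreover have "(\<lambda>t. (sin (real_of_int (int a + int b) * t) + sin (real_of_int (int a - int b) * t)) / 2)
       = (\<lambda>t. sin (real a * t) * cos (real b * t))"
      by (auto simp: sin_add sin_diff algebra_simps)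
    ultimately show ?thesis by simp
  qed
  have cs: "(\<lambda>t. cos (real a * t) * sin (real b * t)) \<in> TP" for a b
    using sc[of b a] by (simp add: mult.commute)
  show ?thesis
    by (cases "even n \<and> n > 0"; cases "even m \<and> m > 0") (simp_all only: bas_def simp_thms if_True if_False cc ss sc cs)
qed

lemma TP_trig_mult: "(\<lambda>x. trig n x * trig m x) \<in> TP"
proof -
  have "(\<lambda>x. (ww n * ww m) * (bas n x * bas m x)) \<in> TP" by (intro TP_scale TP_bas_mult)
  then show ?thesis by (simp add: trig_bas mult_ac)
qed

lemma TP_mult: "f \<in> TP \<Longrightarrow> g \<in> TP \<Longrightarrow> (\<lambda>x. f x * g x) \<in> TP"
proof (induction f rule: TP.induct)
  case (TP_trig k)
  show ?case using TP_trig(1)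
  proof (induction g rule: TP.induct)
    case (TP_trig j) then show ?case by (rule TP_trig_mult)
  next
    case (TP_add f g) then show ?case using TP.TP_add[OF TP_add(3) TP_add(4)] by (simp add: distrib_left)
  next
    case (TP_scale f c) then show ?case using TP.TP_scale[OF TP_scale(2), of c] by (simp add: mult_ac)
  qed
next
  case (TP_add f1 f2) then show ?case using TP.TP_add[OF TP_add(3) TP_add(4)] by (simp add: distrib_right)
next
  case (TP_scale f c) then show ?case using TP.TP_scale[OF TP_scale(2), of c] by (simp add: mult_ac)
qed

lemma TP_poly: "real_polynomial_function g \<Longrightarrow> (\<lambda>t. g (cis t)) \<in> TP"
proof (induction g rule: real_polynomial_function.induct)
  case (linear f)
  have e: "f (cis t) = cos t * f 1 + sin t * f \<i>" for t
  proof -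
    have "cis t = cos t *\<^sub>R 1 + sin t *\<^sub>R \<i>" by (simp add: cis.ctr complex_eq_iff)
    moreover have "linear f" using linear by (rule bounded_linear.linear)
    ultimately show ?thesis by (simp add: linear_add linear_scale)
  qed
  have "(\<lambda>t. f 1 * cos (real 1 * t) + f \<i> * sin (real 1 * t)) \<in> TP"
    by (intro TP_add TP_scale TP_cos_nat TP_sin_nat)
  then show ?case by (simp add: e mult_ac)
next
  case (const c) then show ?case by (rule TP_const)
next
  case (add f g) show ?case by (rule TP_add[OF add.IH(1) add.IH(2)])
next
  case (mult f g) show ?case by (rule TP_mult[OF mult.IH(1) mult.IH(2)])
qed

lemma TP_continuous: "P \<in> TP \<Longrightarrow> continuous_on UNIV P"
proof (induction P rule: TP.induct)
  case (TP_trig k) then show ?case by (rule continuous_trig)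
next
  case (TP_add f g) then show ?case by (intro continuous_on_add)
next
  case (TP_scale f c) then show ?case by (intro continuous_on_mult continuous_on_const)
qed




lemma Arg_minus_one: "Arg (-1) = pi"
  using Arg_of_real[of "-1"] by simp

lemma Arg_near_minus_one:
  assumes "w \<noteq> 0" "Re w / norm w < - cos \<delta>" "0 < \<delta>" "\<delta> < pi/2"
  shows "\<bar>Arg w\<bar> \<ge> pi - \<delta>"
proof (rule ccontr)
  assume "\<not> ?thesis"
  then have a: "\<bar>Arg w\<bar> < pi - \<delta>" by simp
  have "cos (pi - \<delta>) < cos \<bar>Arg w\<bar>"
    using a assms(3,4) by (subst cos_mono_less_eq) auto
  moreover have "cos \<bar>Arg w\<bar> = cos (Arg w)" by (simp add: abs_real_def)
  moreover have "cos (Arg w) = Re w / norm w" using assms(1) by (rule cos_Arg)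
  ultimately show False using assms(2) by simp
qed

lemma circle_approx:
  assumes hc: "continuous_on UNIV h" and d: "0 < \<delta>" "\<delta> < pi/2"
    and h0: "\<And>t. \<bar>t\<bar> \<ge> pi - \<delta> \<Longrightarrow> h t = 0" and e: "0 < \<eta>"
  shows "\<exists>P\<in>TP. \<forall>t\<in>{-pi..pi}. \<bar>h t - P t\<bar> < \<eta>"
proof -
  define F where "F z = h (Arg z)" for z
  have hcont: "isCont h x" for x using hc by (simp add: continuous_on_eq_continuous_at)
  have "isCont F z" if "z \<in> sphere 0 1" for z
  proof (cases "z \<in> \<real>\<^sub>\<le>\<^sub>0")
    case False
    show ?thesis unfolding F_def
      by (rule continuous_at_compose[of z Arg h, unfolded o_def]) (use False continuous_at_Arg hcont in auto)
  next
    case True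
    then have z: "z = -1" using that
      by (auto simp: nonpos_Reals_def dist_norm)
    have lim: "((\<lambda>w. Re w / norm w) \<longlongrightarrow> Re (-1) / norm (-1::complex)) (nhds (-1))"
      by (intro tendsto_intros filterlim_ident) auto
    have "cos \<delta> < 1" using d cos_monotone_0_pi[of 0 \<delta>] by auto
    then have ev1: "eventually (\<lambda>w. Re w / norm w < - cos \<delta>) (nhds (-1::complex))"
      using order_tendstoD(2)[OF lim, of "- cos \<delta>"] by simp
    have ev2: "eventually (\<lambda>w. w \<noteq> 0) (nhds (-1::complex))"
      by (rule t1_space_nhds) simp
    have "eventually (\<lambda>w. F w = 0) (nhds (-1::complex))"
      using ev1 ev2
    proof eventually_elim
      case (elim w)
      then show ?case unfolding F_def using Arg_near_minus_one[OF elim(2) elim(1) d] h0 by simp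
    qed
    then have ev: "eventually (\<lambda>w. 0 = F w) (at (-1::complex))"
      by (auto simp: eventually_at_filter elim: eventually_mono)
    have F1: "F (-1) = 0" unfolding F_def using h0[of pi] d
      by (simp add: Arg_minus_one)
    show ?thesis unfolding z isCont_def F1
      by (rule Lim_transform_eventually[OF tendsto_const ev])
  qed
  then have "continuous_on (sphere 0 1) F"
    by (intro continuous_at_imp_continuous_on) auto
  from Stone_Weierstrass_polynomial_function[OF compact_sphere this e]
  obtain g where g: "polynomial_function g" "\<forall>x\<in>sphere 0 1. norm (F x - g x) < \<eta>" by blast
  have gr: "real_polynomial_function g" using g(1) by (simp add: real_polynomial_function_eq)
  show ?thesis
  proof (intro bexI ballI)
    show "(\<lambda>t. g (cis t)) \<in> TP" by (rule TP_poly[OF gr])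
    fix t assume t: "t \<in> {-pi..pi}"
    have Ft: "F (cis t) = h t"
    proof (cases "t = -pi")
      case True
      have "cis (-pi) = -1" by (simp add: complex_eq_iff)
      then show ?thesis unfolding F_def using h0[of pi] h0[of "-pi"] d True by (simp add: Arg_minus_one)
    next
      case False
      then show ?thesis using t unfolding F_def by (subst Arg_cis) auto
    qed
    show "\<bar>h t - g (cis t)\<bar> < \<eta>" using g(2)[rule_format, of "cis t"] Ft by simp
  qed
qed




lemma space_torus [simp]: "space torus = {-pi..pi}"
  by (simp add: torus_def)

lemma sets_torus_interval: "{-pi..pi} \<in> sets lebesgue" by simp

lemma finite_torus: "finite_measure torus"
  unfolding torus_def by (rule finite_measure_lebesgue_on) simp

lemma integrable_torus_const [simp]: "integrable torus (\<lambda>x. c)"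
  unfolding torus_def by simp

lemma cont_meas: "continuous_on UNIV g \<Longrightarrow> g \<in> borel_measurable torus"
  unfolding torus_def
  by (rule continuous_imp_measurable_on_sets_lebesgue) (auto intro: continuous_on_subset)

lemma AE_torus_negligible:
  assumes "negligible N"
  shows "AE x in torus. x \<notin> N"
proof -
  have "AE x in lebesgue. x \<notin> N" using assms by (intro AE_not_in) (simp add: negligible_iff_null_sets)
  then show ?thesis unfolding torus_def
    by (subst AE_restrict_space_iff) (auto elim: eventually_mono)
qed

lemma powr_sum_bound:
  fixes a b p :: real
  assumes "0 \<le> p"
  shows "\<bar>a + b\<bar> powr p \<le> 2 powr p * (\<bar>a\<bar> powr p + \<bar>b\<bar> powr p)"
proof -
  have "\<bar>a + b\<bar> \<le> 2 * max \<bar>a\<bar> \<bar>b\<bar>" by auto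
  then have "\<bar>a + b\<bar> powr p \<le> (2 * max \<bar>a\<bar> \<bar>b\<bar>) powr p"
    using assms by (intro powr_mono2) auto
  also have "\<dots> = 2 powr p * max \<bar>a\<bar> \<bar>b\<bar> powr p" by (simp add: powr_mult)
  also have "max \<bar>a\<bar> \<bar>b\<bar> powr p \<le> \<bar>a\<bar> powr p + \<bar>b\<bar> powr p"
    by (cases "\<bar>a\<bar> \<le> \<bar>b\<bar>") (auto simp: max_def)
  then have "2 powr p * max \<bar>a\<bar> \<bar>b\<bar> powr p \<le> 2 powr p * (\<bar>a\<bar> powr p + \<bar>b\<bar> powr p)"
    by (intro mult_left_mono) auto
  finally show ?thesis .
qed

lemma Ip_tri:
  fixes u v w :: "real \<Rightarrow> real" and p :: real
  assumes "u \<in> borel_measurable torus" "v \<in> borel_measurable torus" "w \<in> borel_measurable torus"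
    and iuv: "integrable torus (\<lambda>x. \<bar>u x - v x\<bar> powr p)"
    and ivw: "integrable torus (\<lambda>x. \<bar>v x - w x\<bar> powr p)" and p: "0 \<le> p"
  shows "integrable torus (\<lambda>x. \<bar>u x - w x\<bar> powr p)"
    and "(\<integral>x. \<bar>u x - w x\<bar> powr p \<partial>torus) \<le> 2 powr p * ((\<integral>x. \<bar>u x - v x\<bar> powr p \<partial>torus) + (\<integral>x. \<bar>v x - w x\<bar> powr p \<partial>torus))"
proof -
  have pt: "\<bar>u x - w x\<bar> powr p \<le> 2 powr p * (\<bar>u x - v x\<bar> powr p + \<bar>v x - w x\<bar> powr p)" for x
    using powr_sum_bound[OF p, of "u x - v x" "v x - w x"] by simp
  have ib: "integrable torus (\<lambda>x. 2 powr p * (\<bar>u x - v x\<bar> powr p + \<bar>v x - w x\<bar> powr p))"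
    using iuv ivw by (intro integrable_mult_right Bochner_Integration.integrable_add)
  have m: "(\<lambda>x. \<bar>u x - w x\<bar> powr p) \<in> borel_measurable torus" using assms(1,3) by measurable
  show i: "integrable torus (\<lambda>x. \<bar>u x - w x\<bar> powr p)"
  proof (rule Bochner_Integration.integrable_bound[OF ib m])
    show "AE x in torus. norm (\<bar>u x - w x\<bar> powr p) \<le> norm (2 powr p * (\<bar>u x - v x\<bar> powr p + \<bar>v x - w x\<bar> powr p))"
      using pt by (intro AE_I2) (simp add: order.trans[OF _ abs_ge_self])
  qed
  have "(\<integral>x. \<bar>u x - w x\<bar> powr p \<partial>torus) \<le> (\<integral>x. 2 powr p * (\<bar>u x - v x\<bar> powr p + \<bar>v x - w x\<bar> powr p) \<partial>torus)"
    by (intro integral_mono i ib pt)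
  also have "\<dots> = 2 powr p * ((\<integral>x. \<bar>u x - v x\<bar> powr p \<partial>torus) + (\<integral>x. \<bar>v x - w x\<bar> powr p \<partial>torus))"
    using iuv ivw by simp
  finally show "(\<integral>x. \<bar>u x - w x\<bar> powr p \<partial>torus) \<le> 2 powr p * ((\<integral>x. \<bar>u x - v x\<bar> powr p \<partial>torus) + (\<integral>x. \<bar>v x - w x\<bar> powr p \<partial>torus))" .
qed

lemma Lp_DCT:
  fixes s :: "nat \<Rightarrow> real \<Rightarrow> real" and f w :: "real \<Rightarrow> real" and p :: real
  assumes sm: "\<And>n. s n \<in> borel_measurable torus" and fm: "f \<in> borel_measurable torus"
    and lim: "AE x in torus. (\<lambda>n. s n x) \<longlonglongrightarrow> f x"
    and bd: "\<And>n x. x \<in> {-pi..pi} \<Longrightarrow> \<bar>s n x - f x\<bar> \<le> w x"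
    and wi: "integrable torus (\<lambda>x. w x powr p)" and p: "0 < p"
  shows "(\<lambda>n. \<integral>x. \<bar>s n x - f x\<bar> powr p \<partial>torus) \<longlonglongrightarrow> 0"
proof -
  have "(\<lambda>n. \<integral>x. \<bar>s n x - f x\<bar> powr p \<partial>torus) \<longlonglongrightarrow> (\<integral>x. 0 \<partial>torus)"
  proof (rule integral_dominated_convergence[where w = "\<lambda>x. w x powr p"])
    show "(\<lambda>x. 0::real) \<in> borel_measurable torus" by simp
    show "(\<lambda>x. \<bar>s n x - f x\<bar> powr p) \<in> borel_measurable torus" for n using sm fm by measurable
    show "integrable torus (\<lambda>x. w x powr p)" by (rule wi)
    show "AE x in torus. (\<lambda>n. \<bar>s n x - f x\<bar> powr p) \<longlonglongrightarrow> 0"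
      using lim
    proof (rule eventually_mono)
      fix x assume "(\<lambda>n. s n x) \<longlonglongrightarrow> f x"
      then have "(\<lambda>n. \<bar>s n x - f x\<bar>) \<longlonglongrightarrow> 0"
        by (intro tendsto_rabs_zero) (simp add: LIM_zero)
      then show "(\<lambda>n. \<bar>s n x - f x\<bar> powr p) \<longlonglongrightarrow> 0"
        using p by (intro tendsto_zero_powrI) auto
    qed
    show "AE x in torus. norm (\<bar>s n x - f x\<bar> powr p) \<le> w x powr p" for n
      using p bd by (intro AE_I2) (auto intro!: powr_mono2)
  qed
  then show ?thesis by simp
qed

lemma tendsto_small: "(X \<longlonglongrightarrow> (0::real)) \<Longrightarrow> e > 0 \<Longrightarrow> \<exists>n. X n < e"
  by (metis eventually_sequentially order.refl order_tendstoD(2))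




lemma integral_torus_const: "(\<integral>x. c \<partial>torus) = 2 * pi * c"
proof -
  have "(\<integral>x. c \<partial>torus) = integral {-pi..pi} (\<lambda>x. c)"
    unfolding torus_def by (rule lebesgue_integral_eq_integral) auto
  then show ?thesis by simp
qed

lemma density:
  fixes f :: "real \<Rightarrow> real" and p \<epsilon> :: real
  assumes f: "f \<in> Lp p" and p: "1 \<le> p" and e: "0 < \<epsilon>"
  shows "\<exists>P\<in>TP. integrable torus (\<lambda>x. \<bar>f x - P x\<bar> powr p) \<and> (\<integral>x. \<bar>f x - P x\<bar> powr p \<partial>torus) < \<epsilon>"
proof -
  have fm: "f \<in> borel_measurable torus" and fi: "integrable torus (\<lambda>x. \<bar>f x\<bar> powr p)"
    using f by (auto simp: Lp_def)
  define A where "A = 2 powr p"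
  have A1: "1 \<le> A" unfolding A_def using p by (simp add: ge_one_powr_ge_zero)
  define e1 where "e1 = \<epsilon> / (3 * A * A)"
  have e1: "0 < e1" using e A1 unfolding e1_def by simp
  define tr where "tr M y = max (-M) (min M y)" for M y :: real
  have tr_le: "\<bar>tr M y\<bar> \<le> M" if "0 \<le> M" for M y using that by (auto simp: tr_def)
  have tr_id: "\<bar>y\<bar> \<le> M \<Longrightarrow> tr M y = y" for M y by (auto simp: tr_def)
  have tr_tendsto: "(\<lambda>n. tr M (X n)) \<longlonglongrightarrow> tr M y" if "X \<longlonglongrightarrow> y" for M y and X :: "nat \<Rightarrow> real"
    unfolding tr_def by (intro tendsto_intros that)
  have trm: "(\<lambda>x. tr M (f x)) \<in> borel_measurable torus" for M unfolding tr_def using fm by measurable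
  have "(\<lambda>n. \<integral>x. \<bar>tr (real n) (f x) - f x\<bar> powr p \<partial>torus) \<longlonglongrightarrow> 0"
  proof (rule Lp_DCT[where w = "\<lambda>x. \<bar>f x\<bar>"])
    show "AE x in torus. (\<lambda>n. tr (real n) (f x)) \<longlonglongrightarrow> f x"
    proof (intro AE_I2 tendsto_eventually)
      fix x
      show "\<forall>\<^sub>F n in sequentially. tr (real n) (f x) = f x"
        unfolding eventually_sequentially
        by (rule exI[of _ "nat \<lceil>\<bar>f x\<bar>\<rceil>"]) (auto intro!: tr_id simp: nat_le_iff ceiling_le_iff)
    qed
    show "\<bar>tr (real n) (f x) - f x\<bar> \<le> \<bar>f x\<bar>" for n x by (auto simp: tr_def)
  qed (use fm trm fi p in auto)
  then obtain n1 where n1: "(\<integral>x. \<bar>tr (real n1) (f x) - f x\<bar> powr p \<partial>torus) < e1"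
    using tendsto_small e1 by blast
  define M where "M = real n1"
  define u where "u x = tr M (f x)" for x
  have M0: "0 \<le> M" unfolding M_def by simp
  have ub: "\<bar>u x\<bar> \<le> M" for x unfolding u_def using tr_le[OF M0] .
  have um: "u \<in> borel_measurable torus" unfolding u_def by (rule trm)
  have ufm: "(\<lambda>x. \<bar>f x - u x\<bar> powr p) \<in> borel_measurable torus" using fm um by measurable
  have ufi: "integrable torus (\<lambda>x. \<bar>f x - u x\<bar> powr p)"
  proof (rule Bochner_Integration.integrable_bound[OF fi ufm])
    show "AE x in torus. norm (\<bar>f x - u x\<bar> powr p) \<le> norm (\<bar>f x\<bar> powr p)"
      using p M0 by (intro AE_I2) (auto intro!: powr_mono2 simp: u_def tr_def)
  qed
  have Ifu: "(\<integral>x. \<bar>f x - u x\<bar> powr p \<partial>torus) < e1"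
    using n1 unfolding u_def M_def by (simp add: abs_minus_commute)
  have "u measurable_on {-pi..pi}"
    using um by (subst measurable_on_iff_borel_measurable) (auto simp: torus_def)
  then obtain N g where N: "negligible N" and gc: "\<And>n. continuous_on UNIV (g n)"
    and gl: "\<And>x. x \<notin> N \<Longrightarrow> (\<lambda>n. g n x) \<longlonglongrightarrow> (if x \<in> {-pi..pi} then u x else 0)"
    unfolding measurable_on_def by blast
  define chi where "chi n t = max 0 (min 1 ((real n + 1) * (pi - \<bar>t\<bar>) - 1))" for n :: nat and t :: real
  define c where "c n x = chi n x * tr M (g n x)" for n x
  have cc: "continuous_on UNIV (c n)" for n
    unfolding c_def chi_def tr_def
    by (intro continuous_intros gc[THEN continuous_on_subset]) auto
  have cb: "\<bar>c n x\<bar> \<le> M" for n x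
  proof -
    have "0 \<le> chi n x" "chi n x \<le> 1" unfolding chi_def by (simp_all add: max_def min_def)
    then have "\<bar>c n x\<bar> \<le> 1 * M" unfolding c_def abs_mult
      using tr_le[OF M0] by (intro mult_mono) auto
    then show ?thesis by simp
  qed
  have "(\<lambda>n. \<integral>x. \<bar>c n x - u x\<bar> powr p \<partial>torus) \<longlonglongrightarrow> 0"
  proof (rule Lp_DCT[where w = "\<lambda>x. 2 * M"])
    have neg: "negligible (N \<union> {-pi, pi})" using N by (simp add: negligible_Un)
    show "AE x in torus. (\<lambda>n. c n x) \<longlonglongrightarrow> u x"
      using AE_torus_negligible[OF neg] AE_space
    proof eventually_elim
      case (elim x)
      then have x: "x \<notin> N" "\<bar>x\<bar> < pi" by auto
      have chi1: "(\<lambda>n. chi n x) \<longlonglongrightarrow> 1"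
      proof (rule tendsto_eventually)
        have pos: "0 < pi - \<bar>x\<bar>" using x by simp
        obtain K :: nat where K: "2 / (pi - \<bar>x\<bar>) < real K" using reals_Archimedean2 by blast
        show "\<forall>\<^sub>F n in sequentially. chi n x = 1"
          unfolding eventually_sequentially
        proof (intro exI allI impI)
          fix n assume "K \<le> n"
          then have "2 / (pi - \<bar>x\<bar>) < real n + 1" using K by linarith
          then have "2 < (real n + 1) * (pi - \<bar>x\<bar>)" using pos by (simp add: field_simps)
          then show "chi n x = 1" unfolding chi_def by simp
        qed
      qed
      have "(\<lambda>n. tr M (g n x)) \<longlonglongrightarrow> tr M (u x)"
      proof (intro tr_tendsto)
        have "- pi \<le> x \<and> x \<le> pi" using x(2) by linarith
        then show "(\<lambda>n. g n x) \<longlonglongrightarrow> u x" using gl[OF x(1)] by simp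
      qed
      then have "(\<lambda>n. c n x) \<longlonglongrightarrow> 1 * tr M (u x)"
        unfolding c_def by (intro tendsto_mult chi1)
      then show ?case using tr_id[OF ub] by simp
    qed
    show "\<bar>c n x - u x\<bar> \<le> 2 * M" for n x using cb[of n x] ub[of x] by linarith
  qed (use cc cont_meas um p in auto)
  then obtain n2 where n2: "(\<integral>x. \<bar>c n2 x - u x\<bar> powr p \<partial>torus) < e1"
    using tendsto_small e1 by blast
  define h where "h = c n2"
  have hm: "h \<in> borel_measurable torus" unfolding h_def by (rule cont_meas[OF cc])
  have uhm: "(\<lambda>x. \<bar>u x - h x\<bar> powr p) \<in> borel_measurable torus" using um hm by measurable
  have uhi: "integrable torus (\<lambda>x. \<bar>u x - h x\<bar> powr p)"
  proof (rule Bochner_Integration.integrable_bound[OF integrable_torus_const[of "(2*M) powr p"] uhm])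
    show "AE x in torus. norm (\<bar>u x - h x\<bar> powr p) \<le> norm ((2*M) powr p)"
    proof (intro AE_I2)
      fix x
      have "\<bar>u x - h x\<bar> \<le> 2 * M" using cb[of n2 x] ub[of x] unfolding h_def by linarith
      then have "\<bar>u x - h x\<bar> powr p \<le> (2 * M) powr p" using p by (intro powr_mono2) auto
      then show "norm (\<bar>u x - h x\<bar> powr p) \<le> norm ((2*M) powr p)" by simp
    qed
  qed
  have Iuh: "(\<integral>x. \<bar>u x - h x\<bar> powr p \<partial>torus) < e1"
    using n2 unfolding h_def by (simp add: abs_minus_commute)
  define \<delta> where "\<delta> = 1 / (2 * (real n2 + 1))"
  have d0: "0 < \<delta>" unfolding \<delta>_def by simp
  have "\<delta> \<le> 1 / 2" unfolding \<delta>_def by (simp add: field_simps)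
  then have d1: "\<delta> < pi / 2" using pi_gt3 by linarith
  have h0: "h t = 0" if "\<bar>t\<bar> \<ge> pi - \<delta>" for t
  proof -
    have "(real n2 + 1) * (pi - \<bar>t\<bar>) \<le> (real n2 + 1) * \<delta>"
      using that by (intro mult_left_mono) auto
    also have "\<dots> = 1/2" unfolding \<delta>_def by simp
    finally have "chi n2 t = 0" unfolding chi_def by simp
    then show ?thesis unfolding h_def c_def by simp
  qed
  define \<eta> where "\<eta> = (e1 / (4 * pi)) powr (1 / p)"
  have eta0: "0 < \<eta>" unfolding \<eta>_def using e1 by simp
  have etap: "\<eta> powr p = e1 / (4 * pi)" unfolding \<eta>_def using e1 p by (simp add: powr_powr)
  obtain P where P: "P \<in> TP" and hP: "\<forall>t\<in>{-pi..pi}. \<bar>h t - P t\<bar> < \<eta>"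
    using circle_approx[OF cc[of n2, folded h_def] d0 d1 h0 eta0] by blast
  have Pm: "P \<in> borel_measurable torus" by (rule cont_meas[OF TP_continuous[OF P]])
  have hPm: "(\<lambda>x. \<bar>h x - P x\<bar> powr p) \<in> borel_measurable torus" using hm Pm by measurable
  have hPb: "\<bar>h x - P x\<bar> powr p \<le> \<eta> powr p" if "x \<in> {-pi..pi}" for x
    using hP that p by (intro powr_mono2) (auto intro: less_imp_le)
  have hPi: "integrable torus (\<lambda>x. \<bar>h x - P x\<bar> powr p)"
  proof (rule Bochner_Integration.integrable_bound[OF integrable_torus_const[of "\<eta> powr p"] hPm])
    show "AE x in torus. norm (\<bar>h x - P x\<bar> powr p) \<le> norm (\<eta> powr p)"
      using hPb by (intro AE_I2) auto
  qed
  have "(\<integral>x. \<bar>h x - P x\<bar> powr p \<partial>torus) \<le> (\<integral>x. \<eta> powr p \<partial>torus)"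
    using hPb by (intro integral_mono hPi) auto
  also have "\<dots> = 2 * pi * (e1 / (4 * pi))" by (subst integral_torus_const) (simp add: etap)
  also have "\<dots> = e1 / 2" by simp
  finally have IhP: "(\<integral>x. \<bar>h x - P x\<bar> powr p \<partial>torus) \<le> e1 / 2" .
  have p0: "0 \<le> p" using p by simp
  note T1 = Ip_tri[OF um hm Pm uhi hPi p0]
  note T2 = Ip_tri[OF fm um Pm ufi T1(1) p0]
  have "(\<integral>x. \<bar>f x - P x\<bar> powr p \<partial>torus) \<le> A * (e1 + A * (e1 + e1 / 2))"
  proof -
    have "(\<integral>x. \<bar>u x - P x\<bar> powr p \<partial>torus) \<le> A * (e1 + e1 / 2)"
      using T1(2) Iuh IhP A1 unfolding A_def[symmetric]
      by (smt (verit) mult_left_mono)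
    then show ?thesis using T2(2) Ifu A1 unfolding A_def[symmetric]
      by (smt (verit) mult_left_mono)
  qed
  also have "\<dots> < \<epsilon>"
  proof -
    have "A * (e1 + A * (e1 + e1 / 2)) \<le> A * (A * e1 + A * (e1 + e1 / 2))"
      using A1 e1 by (intro mult_left_mono) (auto simp: mult_le_cancel_right1)
    also have "\<dots> = 5/2 * (A * A * e1)" by (simp add: algebra_simps)
    also have "A * A * e1 = \<epsilon> / 3" unfolding e1_def using A1 by simp
    finally show ?thesis using e by simp
  qed
  finally show ?thesis using P T2(1) by blast
qed




lemma measure_torus [simp]: "measure torus {-pi..pi} = 2 * pi"
  using integral_torus_const[of 1] by simp

lemma trig_bound: "\<bar>trig i x\<bar> \<le> 1"
proof -
  have s1: "1 \<le> sqrt pi" using pi_gt3 by simp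
  have s2: "1 \<le> sqrt (2*pi)" using pi_gt3 by simp
  have c: "\<bar>cos y\<bar> \<le> sqrt pi" for y using s1 abs_cos_le_one[of y] by linarith
  have s: "\<bar>sin y\<bar> \<le> sqrt pi" for y using s1 abs_sin_le_one[of y] by linarith
  show ?thesis
    unfolding trig_def using s2 c s by (auto simp: abs_divide divide_le_eq)
qed

lemma TP_Lp: "P \<in> TP \<Longrightarrow> 0 \<le> p \<Longrightarrow> P \<in> Lp p"
proof -
  assume P: "P \<in> TP" and p: "0 \<le> p"
  have c: "continuous_on UNIV P" by (rule TP_continuous[OF P])
  have m: "P \<in> borel_measurable torus" by (rule cont_meas[OF c])
  have "compact (P ` {-pi..pi})"
    by (rule compact_continuous_image[OF continuous_on_subset[OF c]]) auto
  then have "bounded (P ` {-pi..pi})" by (rule compact_imp_bounded)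
  then obtain B where "\<forall>y\<in>P ` {-pi..pi}. \<bar>y\<bar> \<le> B" unfolding bounded_real by blast
  then have B: "\<And>x. x \<in> {-pi..pi} \<Longrightarrow> \<bar>P x\<bar> \<le> B" by blast
  have "integrable torus (\<lambda>x. \<bar>P x\<bar> powr p)"
  proof (rule Bochner_Integration.integrable_bound[OF integrable_torus_const[of "B powr p"]])
    show "(\<lambda>x. \<bar>P x\<bar> powr p) \<in> borel_measurable torus" using m by measurable
    show "AE x in torus. norm (\<bar>P x\<bar> powr p) \<le> norm (B powr p)"
    proof (rule AE_I2)
      fix x assume "x \<in> space torus"
      then have "\<bar>P x\<bar> \<le> B" using B by simp
      then have "\<bar>P x\<bar> powr p \<le> B powr p" using p by (intro powr_mono2) auto
      then show "norm (\<bar>P x\<bar> powr p) \<le> norm (B powr p)" by simp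
    qed
  qed
  then show "P \<in> Lp p" using m by (simp add: Lp_def)
qed

lemma trig_Lp: "0 \<le> p \<Longrightarrow> trig k \<in> Lp p"
  by (rule TP_Lp[OF TP_trig])

lemma Lp_scale: "f \<in> Lp p \<Longrightarrow> (\<lambda>x. c * f x) \<in> Lp p"
proof -
  assume f: "f \<in> Lp p"
  then have m: "f \<in> borel_measurable torus" and i: "integrable torus (\<lambda>x. \<bar>f x\<bar> powr p)" by (auto simp: Lp_def)
  have "integrable torus (\<lambda>x. \<bar>c\<bar> powr p * \<bar>f x\<bar> powr p)" using i by simp
  moreover have "(\<lambda>x. \<bar>c\<bar> powr p * \<bar>f x\<bar> powr p) = (\<lambda>x. \<bar>c * f x\<bar> powr p)"
    by (simp add: abs_mult powr_mult)
  ultimately show ?thesis using m by (simp add: Lp_def)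
qed

lemma Lp_diff: "f \<in> Lp p \<Longrightarrow> g \<in> Lp p \<Longrightarrow> 0 \<le> p \<Longrightarrow> (\<lambda>x. f x - g x) \<in> Lp p"
proof -
  assume f: "f \<in> Lp p" and g: "g \<in> Lp p" and p: "0 \<le> p"
  have fm: "f \<in> borel_measurable torus" "integrable torus (\<lambda>x. \<bar>f x - 0\<bar> powr p)" using f by (auto simp: Lp_def)
  have gm: "g \<in> borel_measurable torus" "integrable torus (\<lambda>x. \<bar>0 - g x\<bar> powr p)" using g by (auto simp: Lp_def)
  have "integrable torus (\<lambda>x. \<bar>f x - g x\<bar> powr p)"
    using Ip_tri(1)[OF fm(1) _ gm(1) fm(2) gm(2) p] by simp
  then show ?thesis using fm gm by (simp add: Lp_def)
qed

lemma Lp_integrable: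
  assumes f: "f \<in> Lp p" and p: "1 \<le> p"
  shows "integrable torus f"
proof -
  have m: "f \<in> borel_measurable torus" and i: "integrable torus (\<lambda>x. \<bar>f x\<bar> powr p)" using f by (auto simp: Lp_def)
  show ?thesis
  proof (rule Bochner_Integration.integrable_bound[OF Bochner_Integration.integrable_add[OF integrable_torus_const[of 1] i] m])
    show "AE x in torus. norm (f x) \<le> norm (1 + \<bar>f x\<bar> powr p)"
    proof (intro AE_I2)
      fix x
      have "\<bar>f x\<bar> \<le> 1 + \<bar>f x\<bar> powr p"
      proof (cases "\<bar>f x\<bar> \<le> 1")
        case False
        then have "\<bar>f x\<bar> powr 1 \<le> \<bar>f x\<bar> powr p" using p by (intro powr_mono) auto
        then show ?thesis using False by simp
      next
        case True then show ?thesis using powr_ge_zero[of "\<bar>f x\<bar>" p] by linarith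
      qed
      then show "norm (f x) \<le> norm (1 + \<bar>f x\<bar> powr p)" by simp
    qed
  qed
qed

lemma Lp_trig_integrable:
  assumes f: "f \<in> Lp p" and p: "1 \<le> p"
  shows "integrable torus (\<lambda>x. f x * trig i x)"
proof (rule Bochner_Integration.integrable_bound[OF Lp_integrable[OF f p]])
  have tm: "trig i \<in> borel_measurable torus" by (rule cont_meas[OF continuous_trig])
  have fm: "f \<in> borel_measurable torus" using f by (simp add: Lp_def)
  show "(\<lambda>x. f x * trig i x) \<in> borel_measurable torus" by (intro borel_measurable_times fm tm)
  show "AE x in torus. norm (f x * trig i x) \<le> norm (f x)"
    using trig_bound by (intro AE_I2) (auto simp: abs_mult intro: mult_left_le)
qed

lemma fourier_diff:
  assumes "f \<in> Lp p" "g \<in> Lp p" "1 \<le> p"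
  shows "fourier (\<lambda>x. f x - g x) i = fourier f i - fourier g i"
  unfolding fourier_def using Lp_trig_integrable[OF assms(1,3)] Lp_trig_integrable[OF assms(2,3)]
  by (simp add: left_diff_distrib)

lemma fourier_add:
  assumes "f \<in> Lp p" "g \<in> Lp p" "1 \<le> p"
  shows "fourier (\<lambda>x. f x + g x) i = fourier f i + fourier g i"
  unfolding fourier_def using Lp_trig_integrable[OF assms(1,3)] Lp_trig_integrable[OF assms(2,3)]
  by (simp add: distrib_right)

lemma fourier_scale: "fourier (\<lambda>x. c * f x) i = c * fourier f i"
  unfolding fourier_def by (simp add: mult.assoc)

lemma fourier_bound:
  assumes f: "f \<in> Lp p" and p: "1 \<le> p" and l: "0 < l"
  shows "\<bar>fourier f i\<bar> \<le> 2 * pi / l + l powr (p - 1) * (\<integral>x. \<bar>f x\<bar> powr p \<partial>torus)"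
proof -
  have m: "f \<in> borel_measurable torus" and ip: "integrable torus (\<lambda>x. \<bar>f x\<bar> powr p)" using f by (auto simp: Lp_def)
  have pt: "\<bar>f x * trig i x\<bar> \<le> (1 + l powr p * \<bar>f x\<bar> powr p) / l" for x
  proof -
    have "\<bar>f x * trig i x\<bar> \<le> \<bar>f x\<bar>" using trig_bound by (auto simp: abs_mult intro: mult_left_le)
    moreover have "l * \<bar>f x\<bar> \<le> 1 + (l * \<bar>f x\<bar>) powr p"
    proof (cases "l * \<bar>f x\<bar> \<le> 1")
      case False
      then have "(l * \<bar>f x\<bar>) powr 1 \<le> (l * \<bar>f x\<bar>) powr p" using p by (intro powr_mono) auto
      then show ?thesis using False by simp
    next
      case True then show ?thesis using powr_ge_zero[of "l * \<bar>f x\<bar>" p] by linarith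
    qed
    then have "\<bar>f x\<bar> \<le> (1 + l powr p * \<bar>f x\<bar> powr p) / l"
      using l by (simp add: powr_mult field_simps)
    ultimately show ?thesis by linarith
  qed
  have i2: "integrable torus (\<lambda>x. (1 + l powr p * \<bar>f x\<bar> powr p) / l)"
    using ip by (intro integrable_divide Bochner_Integration.integrable_add integrable_mult_right) auto
  have "\<bar>fourier f i\<bar> \<le> (\<integral>x. \<bar>f x * trig i x\<bar> \<partial>torus)"
    unfolding fourier_def using integral_abs_bound by blast
  also have "\<dots> \<le> (\<integral>x. (1 + l powr p * \<bar>f x\<bar> powr p) / l \<partial>torus)"
    using pt by (intro integral_mono i2 integrable_abs Lp_trig_integrable[OF f p]) auto
  also have "\<dots> = (2 * pi + l powr p * (\<integral>x. \<bar>f x\<bar> powr p \<partial>torus)) / l"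
    using ip by (simp add: integral_torus_const)
  also have "\<dots> = 2 * pi / l + l powr (p - 1) * (\<integral>x. \<bar>f x\<bar> powr p \<partial>torus)"
    using l by (simp add: powr_diff field_simps)
  finally show ?thesis .
qed

lemma coord_le_lnorm:
  assumes x: "x \<in> lspace q" and q: "1 < q"
  shows "\<bar>x i\<bar> \<le> lnorm q x"
proof (cases "q = \<infinity>")
  case True
  then obtain B where B: "\<And>n. \<bar>x n\<bar> \<le> B" using x by (auto simp: lspace_def)
  have "bdd_above (range (\<lambda>n. \<bar>x n\<bar>))" unfolding bdd_above_def using B by auto
  then show ?thesis using True cSUP_upper[of i UNIV "\<lambda>n. \<bar>x n\<bar>"] by (simp add: lnorm_def)
next
  case False
  define Q where "Q = real_of_ereal q"
  have qQ: "q = ereal Q" using False q unfolding Q_def by (cases q) auto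
  have Q1: "1 < Q" using q qQ by simp
  have s: "summable (\<lambda>n. \<bar>x n\<bar> powr Q)" using x False by (simp add: lspace_def Q_def)
  have "\<bar>x i\<bar> powr Q \<le> (\<Sum>n. \<bar>x n\<bar> powr Q)"
    using sum_le_suminf[OF s, of "{i}"] by simp
  then have "(\<bar>x i\<bar> powr Q) powr (1/Q) \<le> (\<Sum>n. \<bar>x n\<bar> powr Q) powr (1/Q)"
    using Q1 by (intro powr_mono2) auto
  then show ?thesis using False Q1 by (simp add: lnorm_def Q_def[symmetric] powr_powr)
qed




lemma zero_if_small: "(\<And>e. 0 < e \<Longrightarrow> \<bar>D\<bar> \<le> e) \<Longrightarrow> D = (0::real)"
proof (rule ccontr)
  assume h: "\<And>e. 0 < e \<Longrightarrow> \<bar>D\<bar> \<le> e" and "D \<noteq> 0"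
  then have "0 < \<bar>D\<bar> / 2" by simp
  from h[OF this] \<open>D \<noteq> 0\<close> show False by simp
qed

lemma ab_part:
  fixes T :: "(real \<Rightarrow> real) \<Rightarrow> nat \<Rightarrow> real" and p :: real and q :: ereal and S :: "(nat \<Rightarrow> real) set"
  assumes p: "1 \<le> p" and q: "1 < q"
    and T_into: "\<forall>f \<in> Lp p. T f \<in> lspace q"
    and T_add: "\<forall>f \<in> Lp p. \<forall>g \<in> Lp p. T (\<lambda>x. f x + g x) = (\<lambda>i. T f i + T g i)"
    and T_scale: "\<forall>f \<in> Lp p. \<forall>c. T (\<lambda>x. c * f x) = (\<lambda>i. c * T f i)"
    and T_bounded: "\<exists>K. \<forall>f \<in> Lp p. lnorm q (T f) \<le> K * Lp_norm p f"
  shows "(\<exists>g\<in>S. \<forall>f\<in>Lp p. T f = (\<lambda>i. g i * fourier f i)) \<longleftrightarrow>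
         ((\<forall>n i. i \<noteq> n \<longrightarrow> T (trig n) i = 0) \<and> (\<lambda>i. T (trig i) i) \<in> S)"
proof
  have p0: "0 \<le> p" using p by simp
  assume "\<exists>g\<in>S. \<forall>f\<in>Lp p. T f = (\<lambda>i. g i * fourier f i)"
  then obtain g where g: "g \<in> S" "\<And>f. f \<in> Lp p \<Longrightarrow> T f = (\<lambda>i. g i * fourier f i)" by blast
  have Tt: "T (trig n) i = (if n = i then g i else 0)" for n i
    using g(2)[OF trig_Lp[OF p0]] by (simp add: fourier_trig)
  have "(\<lambda>i. T (trig i) i) = g" by (simp add: Tt)
  then show "(\<forall>n i. i \<noteq> n \<longrightarrow> T (trig n) i = 0) \<and> (\<lambda>i. T (trig i) i) \<in> S"
    using g(1) by (simp add: Tt)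
next
  have p0: "0 \<le> p" using p by simp
  assume b: "(\<forall>n i. i \<noteq> n \<longrightarrow> T (trig n) i = 0) \<and> (\<lambda>i. T (trig i) i) \<in> S"
  define g where "g i = T (trig i) i" for i
  have gS: "g \<in> S" using b by (simp add: g_def[abs_def])
  have TP_claim: "T P i = g i * fourier P i" if "P \<in> TP" for P i
    using that
  proof (induction P rule: TP.induct)
    case (TP_trig k)
    then show ?case using b by (auto simp: fourier_trig g_def)
  next
    case (TP_add f h)
    have "T (\<lambda>x. f x + h x) i = T f i + T h i"
      using T_add TP_Lp[OF TP_add(1) p0] TP_Lp[OF TP_add(2) p0] by simp
    moreover have "fourier (\<lambda>x. f x + h x) i = fourier f i + fourier h i"
      by (rule fourier_add[OF TP_Lp[OF TP_add(1) p0] TP_Lp[OF TP_add(2) p0] p])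
    ultimately show ?case using TP_add(3,4) by (simp add: distrib_left)
  next
    case (TP_scale f c)
    have "T (\<lambda>x. c * f x) i = c * T f i"
      using T_scale TP_Lp[OF TP_scale(1) p0] by simp
    then show ?case using TP_scale(2) by (simp add: fourier_scale)
  qed
  obtain K where K: "\<And>f. f \<in> Lp p \<Longrightarrow> lnorm q (T f) \<le> K * Lp_norm p f" using T_bounded by blast
  define K' where "K' = max K 0"
  have K'0: "0 \<le> K'" unfolding K'_def by simp
  have bound1: "\<bar>T u i\<bar> \<le> K' * (\<integral>x. \<bar>u x\<bar> powr p \<partial>torus) powr (1/p)" if u: "u \<in> Lp p" for u i
  proof -
    have "\<bar>T u i\<bar> \<le> lnorm q (T u)" using coord_le_lnorm[OF _ q] T_into u by blast
    also have "\<dots> \<le> K * Lp_norm p u" using K[OF u] .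
    also have "\<dots> \<le> K' * Lp_norm p u"
      unfolding K'_def Lp_norm_def by (intro mult_right_mono) auto
    finally show ?thesis by (simp add: Lp_norm_def)
  qed
  show "\<exists>g\<in>S. \<forall>f\<in>Lp p. T f = (\<lambda>i. g i * fourier f i)"
  proof (intro bexI[OF _ gS] ballI ext)
    fix f i assume f: "f \<in> Lp p"
    define D where "D = T f i - g i * fourier f i"
    have "D = 0"
    proof (rule zero_if_small)
      fix e :: real assume e: "0 < e"
      define G where "G = \<bar>g i\<bar>"
      have G0: "0 \<le> G" unfolding G_def by simp
      define l where "l = 6 * pi * G / e + 1"
      have l0: "0 < l" unfolding l_def using G0 e by (simp add: add_nonneg_pos)
      define L where "L = G * l powr (p - 1)"
      have L0: "0 \<le> L" unfolding L_def using G0 by simp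
      define J0 where "J0 = min ((e / (3 * (K' + 1))) powr p) (e / (3 * (L + 1)))"
      have J00: "0 < J0" unfolding J0_def using e K'0 L0 by simp
      obtain P where P: "P \<in> TP" and Pi: "integrable torus (\<lambda>x. \<bar>f x - P x\<bar> powr p)"
        and PJ: "(\<integral>x. \<bar>f x - P x\<bar> powr p \<partial>torus) < J0"
        using density[OF f p J00] by blast
      have PL: "P \<in> Lp p" by (rule TP_Lp[OF P p0])
      define u where "u x = f x - P x" for x
      have uL: "u \<in> Lp p" unfolding u_def by (rule Lp_diff[OF f PL p0])
      define J where "J = (\<integral>x. \<bar>u x\<bar> powr p \<partial>torus)"
      have J0: "0 \<le> J" unfolding J_def by simp
      have JJ: "J \<le> J0" using PJ unfolding J_def u_def by simp
      have fe: "(\<lambda>x. u x + P x) = f" unfolding u_def by simp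
      have Tf: "T f i = T u i + T P i"
        using T_add uL PL fe by metis
      have Ff: "fourier f i = fourier u i + fourier P i"
        using fourier_add[OF uL PL p, of i] fe by simp
      have Dsplit: "D = T u i - g i * fourier u i"
        unfolding D_def Tf Ff TP_claim[OF P] by (simp add: algebra_simps)
      have t1: "\<bar>T u i\<bar> \<le> e / 3"
      proof -
        have "J powr (1/p) \<le> J0 powr (1/p)" using JJ J0 p by (intro powr_mono2) auto
        also have "\<dots> \<le> ((e / (3 * (K' + 1))) powr p) powr (1/p)"
          unfolding J0_def using J00 p by (intro powr_mono2) (auto simp: J0_def)
        also have "\<dots> = e / (3 * (K' + 1))" using p e K'0 by (simp add: powr_powr)
        finally have "K' * J powr (1/p) \<le> K' * (e / (3 * (K' + 1)))" using K'0 by (intro mult_left_mono)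
        also have "\<dots> \<le> e / 3" using K'0 e by (simp add: field_simps)
        finally show ?thesis using bound1[OF uL, of i] unfolding J_def by linarith
      qed
      have t2: "G * \<bar>fourier u i\<bar> \<le> 2 * e / 3"
      proof -
        have "G * \<bar>fourier u i\<bar> \<le> G * (2 * pi / l + l powr (p - 1) * J)"
          using fourier_bound[OF uL p l0, of i] G0 unfolding J_def by (intro mult_left_mono)
        also have "\<dots> = G * 2 * pi / l + L * J" unfolding L_def by (simp add: algebra_simps)
        also have "G * 2 * pi / l \<le> e / 3"
        proof -
          have "G * 2 * pi \<le> e / 3 * l" unfolding l_def using e by (simp add: field_simps)
          then show ?thesis using l0 by (simp add: divide_le_eq)
        qed
        also have "L * J \<le> L * (e / (3 * (L + 1)))"
          using JJ L0 unfolding J0_def by (intro mult_left_mono) auto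
        also have "\<dots> \<le> e / 3" using L0 e by (simp add: field_simps)
        finally show ?thesis by simp
      qed
      have "\<bar>D\<bar> \<le> \<bar>T u i\<bar> + G * \<bar>fourier u i\<bar>"
        unfolding Dsplit G_def by (simp add: abs_mult[symmetric] abs_triangle_ineq4)
      then show "\<bar>D\<bar> \<le> e" using t1 t2 by linarith
    qed
    then show "T f i = g i * fourier f i" unfolding D_def by simp
  qed
qed




lemma sum_diag:
  fixes A R :: "nat \<Rightarrow> nat \<Rightarrow> real"
  assumes off: "\<And>i j. i \<noteq> j \<Longrightarrow> A i j = 0"
  shows "(\<Sum>i<n. \<Sum>j<m. R i j * A i j) = (\<Sum>i<min n m. R i i * A i i)"
proof -
  have inner: "(\<Sum>j<m. R i j * A i j) = (if i \<in> {..<m} then R i i * A i i else 0)" for i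
  proof -
    have "(\<Sum>j<m. R i j * A i j) = (\<Sum>j<m. if i = j then R i i * A i i else 0)"
      by (intro sum.cong) (auto simp: off)
    also have "\<dots> = (if i \<in> {..<m} then R i i * A i i else 0)" by simp
    finally show ?thesis .
  qed
  have "(\<Sum>i<n. \<Sum>j<m. R i j * A i j) = (\<Sum>i<n. if i \<in> {..<m} then R i i * A i i else 0)"
    by (simp only: inner)
  also have "\<dots> = (\<Sum>i\<in>{..<n} \<inter> {..<m}. R i i * A i i)" by (rule sum.inter_restrict[symmetric]) simp
  also have "{..<n} \<inter> {..<m} = {..<min n m}" by auto
  finally show ?thesis .
qed

lemma bc_part:
  fixes A :: "nat \<Rightarrow> nat \<Rightarrow> real" and \<sigma> :: real and SS :: "(nat \<Rightarrow> real) set"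
  assumes sig: "0 < \<sigma>"
    and HD: "\<And>g. g \<in> SS \<longleftrightarrow> (\<exists>C>0. \<forall>N x. (\<forall>i. \<bar>x i\<bar> \<le> 1) \<longrightarrow>
               (\<Sum>i<N. x i * g i) \<le> C * (\<Sum>i<N. \<bar>x i\<bar> powr \<sigma>) powr (1 / \<sigma>))"
  shows "((\<forall>n i. i \<noteq> n \<longrightarrow> A i n = 0) \<and> (\<lambda>i. A i i) \<in> SS) \<longleftrightarrow>
    (\<exists>C>0. \<forall>n m. \<forall>R :: nat \<Rightarrow> nat \<Rightarrow> real. (\<forall>i j. \<bar>R i j\<bar> \<le> 1) \<longrightarrow>
        (\<Sum>i<n. \<Sum>j<m. R i j * A i j) \<le> C * (\<Sum>i<min n m. \<bar>R i i\<bar> powr \<sigma>) powr (1 / \<sigma>))"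
proof
  assume b: "(\<forall>n i. i \<noteq> n \<longrightarrow> A i n = 0) \<and> (\<lambda>i. A i i) \<in> SS"
  then have off: "\<And>i j. i \<noteq> j \<Longrightarrow> A i j = 0" by blast
  obtain C where C: "C > 0" "\<And>N x. (\<forall>i. \<bar>x i\<bar> \<le> 1) \<Longrightarrow>
      (\<Sum>i<N. x i * A i i) \<le> C * (\<Sum>i<N. \<bar>x i\<bar> powr \<sigma>) powr (1 / \<sigma>)"
    using b HD[of "\<lambda>i. A i i"] by blast
  show "\<exists>C>0. \<forall>n m. \<forall>R :: nat \<Rightarrow> nat \<Rightarrow> real. (\<forall>i j. \<bar>R i j\<bar> \<le> 1) \<longrightarrow>
        (\<Sum>i<n. \<Sum>j<m. R i j * A i j) \<le> C * (\<Sum>i<min n m. \<bar>R i i\<bar> powr \<sigma>) powr (1 / \<sigma>)"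
  proof (intro exI[of _ C] conjI allI impI)
    show "0 < C" by (rule C(1))
    fix n m :: nat and R :: "nat \<Rightarrow> nat \<Rightarrow> real" assume R: "\<forall>i j. \<bar>R i j\<bar> \<le> 1"
    show "(\<Sum>i<n. \<Sum>j<m. R i j * A i j) \<le> C * (\<Sum>i<min n m. \<bar>R i i\<bar> powr \<sigma>) powr (1 / \<sigma>)"
    proof -
      have "(\<Sum>i<n. \<Sum>j<m. R i j * A i j) = (\<Sum>i<min n m. R i i * A i i)" by (rule sum_diag[OF off])
      then show ?thesis using C(2)[of "\<lambda>i. R i i" "min n m"] R by simp
    qed
  qed
next
  assume "\<exists>C>0. \<forall>n m. \<forall>R :: nat \<Rightarrow> nat \<Rightarrow> real. (\<forall>i j. \<bar>R i j\<bar> \<le> 1) \<longrightarrow>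
        (\<Sum>i<n. \<Sum>j<m. R i j * A i j) \<le> C * (\<Sum>i<min n m. \<bar>R i i\<bar> powr \<sigma>) powr (1 / \<sigma>)"
  then obtain C where C: "C > 0" "\<And>n m R. (\<forall>i j. \<bar>R i j\<bar> \<le> (1::real)) \<Longrightarrow>
        (\<Sum>i<n. \<Sum>j<m. R i j * A i j) \<le> C * (\<Sum>i<min n m. \<bar>R i i\<bar> powr \<sigma>) powr (1 / \<sigma>)"
    by blast
  have off: "A a b = 0" if ab: "a \<noteq> b" for a b
  proof -
    have le: "c * A a b \<le> 0" if c: "\<bar>c\<bar> \<le> 1" for c
    proof -
      define R where "R i j = (if i = a \<and> j = b then c else 0)" for i j
      have Rb: "\<forall>i j. \<bar>R i j\<bar> \<le> 1" unfolding R_def using c by auto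
      have lhs: "(\<Sum>i<Suc a. \<Sum>j<Suc b. R i j * A i j) = c * A a b"
      proof -
        have "(\<Sum>i<Suc a. \<Sum>j<Suc b. R i j * A i j) = (\<Sum>i<Suc a. if i = a then c * A a b else 0)"
        proof (intro sum.cong refl)
          fix i
          have "(\<Sum>j<Suc b. R i j * A i j) = (\<Sum>j<Suc b. if j = b then (if i = a then c * A a b else 0) else 0)"
            by (intro sum.cong) (auto simp: R_def)
          also have "\<dots> = (if i = a then c * A a b else 0)" by simp
          finally show "(\<Sum>j<Suc b. R i j * A i j) = (if i = a then c * A a b else 0)" .
        qed
        also have "\<dots> = c * A a b" by simp
        finally show ?thesis .
      qed
      have "\<And>i. R i i = 0" unfolding R_def using ab by auto
      then have rhs: "C * (\<Sum>i<min (Suc a) (Suc b). \<bar>R i i\<bar> powr \<sigma>) powr (1 / \<sigma>) = 0" by simp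
      have "(\<Sum>i<Suc a. \<Sum>j<Suc b. R i j * A i j) \<le> C * (\<Sum>i<min (Suc a) (Suc b). \<bar>R i i\<bar> powr \<sigma>) powr (1 / \<sigma>)"
        by (rule C(2)[where R = R and n = "Suc a" and m = "Suc b", OF Rb])
      then show ?thesis using lhs rhs by linarith
    qed
    show ?thesis using le[of 1] le[of "-1"] by simp
  qed
  then have off': "\<And>i j. i \<noteq> j \<Longrightarrow> A i j = 0" by blast
  have "(\<lambda>i. A i i) \<in> SS"
  proof (subst HD, intro exI[of _ C] conjI allI impI)
    show "0 < C" by (rule C(1))
    fix N :: nat and x :: "nat \<Rightarrow> real" assume x: "\<forall>i. \<bar>x i\<bar> \<le> 1"
    define R where "R i j = (if i = j then x i else 0)" for i j
    have Rb: "\<forall>i j. \<bar>R i j\<bar> \<le> 1" unfolding R_def using x by auto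
    show "(\<Sum>i<N. x i * A i i) \<le> C * (\<Sum>i<N. \<bar>x i\<bar> powr \<sigma>) powr (1 / \<sigma>)"
    proof -
      have "(\<Sum>i<N. \<Sum>j<N. R i j * A i j) = (\<Sum>i<min N N. R i i * A i i)" by (rule sum_diag[OF off'])
      moreover have "(\<Sum>i<N. \<Sum>j<N. R i j * A i j) \<le> C * (\<Sum>i<min N N. \<bar>R i i\<bar> powr \<sigma>) powr (1 / \<sigma>)"
        by (rule C(2)[where R = R and n = N and m = N, OF Rb])
      ultimately show ?thesis by (simp add: R_def)
    qed
  qed
  then show "(\<forall>n i. i \<noteq> n \<longrightarrow> A i n = 0) \<and> (\<lambda>i. A i i) \<in> SS" using off by blast
qed

lemma cd_part:
  fixes A :: "nat \<Rightarrow> nat \<Rightarrow> real"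
  shows "(\<exists>C>0. \<forall>n m. \<forall>R :: nat \<Rightarrow> nat \<Rightarrow> real. (\<forall>i j. \<bar>R i j\<bar> \<le> 1) \<longrightarrow>
        (\<Sum>i<n. \<Sum>j<m. R i j * A i j) \<le> C * (\<Sum>i<min n m. \<bar>R i i\<bar> powr 1) powr (1 / 1))
    \<longleftrightarrow>
    (\<exists>C>0. \<forall>n m. \<forall>R :: nat \<Rightarrow> real. (\<forall>j. \<bar>R j\<bar> \<le> 1) \<longrightarrow>
        (n < m \<longrightarrow> (\<Sum>j<m. R j * A n j) \<le> C * \<bar>R n\<bar>) \<and>
        (m \<le> n \<longrightarrow> (\<Sum>j<m. R j * A n j) \<le> 0))"
proof
  assume "\<exists>C>0. \<forall>n m. \<forall>R :: nat \<Rightarrow> nat \<Rightarrow> real. (\<forall>i j. \<bar>R i j\<bar> \<le> 1) \<longrightarrow>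
        (\<Sum>i<n. \<Sum>j<m. R i j * A i j) \<le> C * (\<Sum>i<min n m. \<bar>R i i\<bar> powr 1) powr (1 / 1)"
  then obtain C where C: "C > 0" "\<And>n m R. (\<forall>i j. \<bar>R i j\<bar> \<le> (1::real)) \<Longrightarrow>
        (\<Sum>i<n. \<Sum>j<m. R i j * A i j) \<le> C * (\<Sum>i<min n m. \<bar>R i i\<bar>)"
    by auto
  show "\<exists>C>0. \<forall>n m. \<forall>R :: nat \<Rightarrow> real. (\<forall>j. \<bar>R j\<bar> \<le> 1) \<longrightarrow>
        (n < m \<longrightarrow> (\<Sum>j<m. R j * A n j) \<le> C * \<bar>R n\<bar>) \<and>
        (m \<le> n \<longrightarrow> (\<Sum>j<m. R j * A n j) \<le> 0)"
  proof (intro exI[of _ C] conjI allI impI)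
    show "0 < C" by (rule C(1))
    fix n m :: nat and R :: "nat \<Rightarrow> real" assume R: "\<forall>j. \<bar>R j\<bar> \<le> 1"
    define R' where "R' i j = (if i = n then R j else 0)" for i j
    have Rb: "\<forall>i j. \<bar>R' i j\<bar> \<le> 1" unfolding R'_def using R by auto
    have lhs: "(\<Sum>i<Suc n. \<Sum>j<m. R' i j * A i j) = (\<Sum>j<m. R j * A n j)"
    proof -
      have "(\<Sum>i<Suc n. \<Sum>j<m. R' i j * A i j) = (\<Sum>i<Suc n. if i = n then (\<Sum>j<m. R j * A n j) else 0)"
        by (intro sum.cong) (auto simp: R'_def)
      also have "\<dots> = (\<Sum>j<m. R j * A n j)" by simp
      finally show ?thesis .
    qed
    have rhs: "(\<Sum>i<min (Suc n) m. \<bar>R' i i\<bar>) = (if n < m then \<bar>R n\<bar> else 0)"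
    proof -
      have "(\<Sum>i<min (Suc n) m. \<bar>R' i i\<bar>) = (\<Sum>i<min (Suc n) m. if i = n then \<bar>R n\<bar> else 0)"
        by (intro sum.cong) (auto simp: R'_def)
      also have "\<dots> = (if n < m then \<bar>R n\<bar> else 0)" by simp
      finally show ?thesis .
    qed
    have main0: "(\<Sum>i<Suc n. \<Sum>j<m. R' i j * A i j) \<le> C * (\<Sum>i<min (Suc n) m. \<bar>R' i i\<bar>)"
      by (rule C(2)[where R = R' and n = "Suc n" and m = m, OF Rb])
    have main: "(\<Sum>j<m. R j * A n j) \<le> C * (if n < m then \<bar>R n\<bar> else 0)"
      using main0 unfolding lhs rhs .
    show "n < m \<Longrightarrow> (\<Sum>j<m. R j * A n j) \<le> C * \<bar>R n\<bar>" using main by simp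
    show "m \<le> n \<Longrightarrow> (\<Sum>j<m. R j * A n j) \<le> 0" using main by simp
  qed
next
  assume "\<exists>C>0. \<forall>n m. \<forall>R :: nat \<Rightarrow> real. (\<forall>j. \<bar>R j\<bar> \<le> 1) \<longrightarrow>
        (n < m \<longrightarrow> (\<Sum>j<m. R j * A n j) \<le> C * \<bar>R n\<bar>) \<and>
        (m \<le> n \<longrightarrow> (\<Sum>j<m. R j * A n j) \<le> 0)"
  then obtain C where C: "C > 0" "\<And>n m R. (\<forall>j. \<bar>R j\<bar> \<le> (1::real)) \<Longrightarrow>
        (n < m \<longrightarrow> (\<Sum>j<m. R j * A n j) \<le> C * \<bar>R n\<bar>) \<and>
        (m \<le> n \<longrightarrow> (\<Sum>j<m. R j * A n j) \<le> 0)" by blast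
  show "\<exists>C>0. \<forall>n m. \<forall>R :: nat \<Rightarrow> nat \<Rightarrow> real. (\<forall>i j. \<bar>R i j\<bar> \<le> 1) \<longrightarrow>
        (\<Sum>i<n. \<Sum>j<m. R i j * A i j) \<le> C * (\<Sum>i<min n m. \<bar>R i i\<bar> powr 1) powr (1 / 1)"
  proof (intro exI[of _ C] conjI allI impI)
    show "0 < C" by (rule C(1))
    fix n m :: nat and R :: "nat \<Rightarrow> nat \<Rightarrow> real" assume R: "\<forall>i j. \<bar>R i j\<bar> \<le> 1"
    have row: "(\<Sum>j<m. R i j * A i j) \<le> (if i \<in> {..<m} then C * \<bar>R i i\<bar> else 0)" for i
      using C(2)[of "R i" i m] R by (auto simp: not_less)
    have "(\<Sum>i<n. \<Sum>j<m. R i j * A i j) \<le> (\<Sum>i<n. if i \<in> {..<m} then C * \<bar>R i i\<bar> else 0)"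
      by (intro sum_mono row)
    also have "\<dots> = (\<Sum>i\<in>{..<n} \<inter> {..<m}. C * \<bar>R i i\<bar>)" by (rule sum.inter_restrict[symmetric]) simp
    also have "{..<n} \<inter> {..<m} = {..<min n m}" by auto
    also have "(\<Sum>i<min n m. C * \<bar>R i i\<bar>) = C * (\<Sum>i<min n m. \<bar>R i i\<bar> powr 1) powr (1 / 1)"
      by (simp add: sum_distrib_left)
    finally show "(\<Sum>i<n. \<Sum>j<m. R i j * A i j) \<le> C * (\<Sum>i<min n m. \<bar>R i i\<bar> powr 1) powr (1 / 1)" .
  qed
qed




lemma HD_inf:
  fixes g :: "nat \<Rightarrow> real"
  shows "g \<in> lspace \<infinity> \<longleftrightarrow> (\<exists>C>0. \<forall>N x. (\<forall>i. \<bar>x i\<bar> \<le> 1) \<longrightarrow>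
               (\<Sum>i<N. x i * g i) \<le> C * (\<Sum>i<N. \<bar>x i\<bar> powr 1) powr (1 / 1))"
proof
  assume "g \<in> lspace \<infinity>"
  then obtain B where B: "\<And>n. \<bar>g n\<bar> \<le> B" by (auto simp: lspace_def)
  define C where "C = \<bar>B\<bar> + 1"
  show "\<exists>C>0. \<forall>N x. (\<forall>i. \<bar>x i\<bar> \<le> 1) \<longrightarrow>
               (\<Sum>i<N. x i * g i) \<le> C * (\<Sum>i<N. \<bar>x i\<bar> powr 1) powr (1 / 1)"
  proof (intro exI[of _ C] conjI allI impI)
    show "0 < C" unfolding C_def by simp
    fix N :: nat and x :: "nat \<Rightarrow> real"
    have "(\<Sum>i<N. x i * g i) \<le> (\<Sum>i<N. C * \<bar>x i\<bar>)"
    proof (intro sum_mono)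
      fix i
      have "x i * g i \<le> \<bar>x i\<bar> * \<bar>g i\<bar>" by (simp add: abs_mult[symmetric])
      also have "\<dots> \<le> \<bar>x i\<bar> * C" using B[of i] unfolding C_def by (intro mult_left_mono) auto
      finally show "x i * g i \<le> C * \<bar>x i\<bar>" by (simp add: mult.commute)
    qed
    also have "\<dots> = C * (\<Sum>i<N. \<bar>x i\<bar> powr 1) powr (1 / 1)"
      by (simp add: sum_distrib_left sum_nonneg)
    finally show "(\<Sum>i<N. x i * g i) \<le> C * (\<Sum>i<N. \<bar>x i\<bar> powr 1) powr (1 / 1)" .
  qed
next
  assume "\<exists>C>0. \<forall>N x. (\<forall>i. \<bar>x i\<bar> \<le> 1) \<longrightarrow>
               (\<Sum>i<N. x i * g i) \<le> C * (\<Sum>i<N. \<bar>x i\<bar> powr 1) powr (1 / 1)"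
  then obtain C where C: "\<And>N x. (\<forall>i. \<bar>x i\<bar> \<le> 1) \<Longrightarrow>
               (\<Sum>i<N. x i * g i) \<le> C * (\<Sum>i<N. \<bar>x i\<bar> powr 1) powr (1 / 1)" and C0: "C > 0" by blast
  have "\<bar>g n\<bar> \<le> C" for n
  proof -
    define x where "x i = (if i = n then sgn (g n) else 0)" for i
    have xb: "\<forall>i. \<bar>x i\<bar> \<le> 1" unfolding x_def by (auto simp: abs_sgn_eq)
    have l: "(\<Sum>i<Suc n. x i * g i) = \<bar>g n\<bar>"
    proof -
      have "(\<Sum>i<Suc n. x i * g i) = (\<Sum>i<Suc n. if i = n then sgn (g n) * g n else 0)"
        by (intro sum.cong) (auto simp: x_def)
      also have "\<dots> = \<bar>g n\<bar>" by (simp add: abs_sgn mult.commute)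
      finally show ?thesis .
    qed
    have r: "(\<Sum>i<Suc n. \<bar>x i\<bar> powr 1) powr (1 / 1) \<le> 1"
    proof -
      have "(\<Sum>i<Suc n. \<bar>x i\<bar> powr 1) = (\<Sum>i<Suc n. if i = n then \<bar>sgn (g n)\<bar> else 0)"
        by (intro sum.cong) (auto simp: x_def)
      also have "\<dots> \<le> 1" by (simp add: abs_sgn_eq)
      finally show ?thesis by simp
    qed
    have "\<bar>g n\<bar> \<le> C * (\<Sum>i<Suc n. \<bar>x i\<bar> powr 1) powr (1 / 1)"
      using C[OF xb, of "Suc n"] l by simp
    also have "\<dots> \<le> C * 1" using r C0 by (intro mult_left_mono) auto
    finally show ?thesis by simp
  qed
  then show "g \<in> lspace \<infinity>" by (auto simp: lspace_def)
qed

lemma HD_fin: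
  fixes g :: "nat \<Rightarrow> real" and S \<sigma> :: real
  assumes S: "1 < S" and sig: "\<sigma> = S / (S - 1)"
  shows "g \<in> lspace (ereal S) \<longleftrightarrow> (\<exists>C>0. \<forall>N x. (\<forall>i. \<bar>x i\<bar> \<le> 1) \<longrightarrow>
               (\<Sum>i<N. x i * g i) \<le> C * (\<Sum>i<N. \<bar>x i\<bar> powr \<sigma>) powr (1 / \<sigma>))"
proof -
  have sig1: "1 < \<sigma>" unfolding sig using S by (simp add: field_simps)
  have conj: "1 / \<sigma> + 1 / S = 1" unfolding sig using S by (simp add: field_simps)
  have Ssig: "(S - 1) * \<sigma> = S" unfolding sig using S by (simp add: field_simps)
  show ?thesis
  proof
    assume "g \<in> lspace (ereal S)"
    then have sg: "summable (\<lambda>n. \<bar>g n\<bar> powr S)" by (simp add: lspace_def)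
    define G where "G = (\<Sum>n. \<bar>g n\<bar> powr S)"
    have G0: "0 \<le> G" unfolding G_def by (intro suminf_nonneg[OF sg]) simp
    have partial: "(\<Sum>i<N. \<bar>g i\<bar> powr S) \<le> G" for N
      unfolding G_def by (intro sum_le_suminf[OF sg]) auto
    define C where "C = 1 + G"
    show "\<exists>C>0. \<forall>N x. (\<forall>i. \<bar>x i\<bar> \<le> 1) \<longrightarrow>
               (\<Sum>i<N. x i * g i) \<le> C * (\<Sum>i<N. \<bar>x i\<bar> powr \<sigma>) powr (1 / \<sigma>)"
    proof (intro exI[of _ C] conjI allI impI)
      show "0 < C" unfolding C_def using G0 by simp
      fix N :: nat and x :: "nat \<Rightarrow> real"
      define As where "As = (\<Sum>i<N. \<bar>x i\<bar> powr \<sigma>)"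
      have As0: "0 \<le> As" unfolding As_def by (intro sum_nonneg) simp
      have "(\<Sum>i<N. x i * g i) \<le> (\<Sum>i<N. \<bar>x i\<bar> * \<bar>g i\<bar>)"
        by (intro sum_mono) (simp add: abs_mult[symmetric])
      also have "\<dots> \<le> C * As powr (1 / \<sigma>)"
      proof (cases "As = 0")
        case True
        then have "\<forall>i\<in>{..<N}. \<bar>x i\<bar> powr \<sigma> = 0" unfolding As_def
          using sum_nonneg_eq_0_iff[of "{..<N}" "\<lambda>i. \<bar>x i\<bar> powr \<sigma>"] by simp
        then have "\<forall>i\<in>{..<N}. x i = 0" by simp
        then show ?thesis using True by simp
      next
        case False
        then have Asp: "0 < As" using As0 by simp
        define A where "A = As powr (1 / \<sigma>)"
        have A0: "0 < A" unfolding A_def using Asp by simp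
        have Asig: "A powr \<sigma> = As" unfolding A_def using Asp sig1 by (simp add: powr_powr)
        have y: "\<bar>x i\<bar> / A * \<bar>g i\<bar> \<le> (\<bar>x i\<bar> / A) powr \<sigma> / \<sigma> + \<bar>g i\<bar> powr S / S" for i
          using Youngs_inequality[OF sig1 S conj, of "\<bar>x i\<bar> / A" "\<bar>g i\<bar>"] A0 by simp
        have "(\<Sum>i<N. \<bar>x i\<bar> / A * \<bar>g i\<bar>) \<le> (\<Sum>i<N. (\<bar>x i\<bar> / A) powr \<sigma> / \<sigma> + \<bar>g i\<bar> powr S / S)"
          by (intro sum_mono y)
        also have "\<dots> = (\<Sum>i<N. \<bar>x i\<bar> powr \<sigma> / As / \<sigma>) + (\<Sum>i<N. \<bar>g i\<bar> powr S / S)"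
          unfolding sum.distrib[symmetric] by (intro sum.cong refl) (simp add: powr_divide Asig)
        also have "\<dots> = (\<Sum>i<N. \<bar>x i\<bar> powr \<sigma>) / As / \<sigma> + (\<Sum>i<N. \<bar>g i\<bar> powr S) / S"
          by (simp only: sum_divide_distrib)
        also have "(\<Sum>i<N. \<bar>x i\<bar> powr \<sigma>) / As / \<sigma> = 1 / \<sigma>" using Asp unfolding As_def by simp
        also have "(\<Sum>i<N. \<bar>g i\<bar> powr S) / S \<le> G / S" using partial S by (intro divide_right_mono) auto
        finally have "(\<Sum>i<N. \<bar>x i\<bar> / A * \<bar>g i\<bar>) \<le> 1 / \<sigma> + G / S" by simp
        also have "\<dots> \<le> 1 + G"
        proof -
          have "1 / \<sigma> \<le> 1" using sig1 by simp
          moreover have "G / S \<le> G" using S G0 by (simp add: divide_le_eq mult_le_cancel_left1)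
          ultimately show ?thesis by linarith
        qed
        finally have "(\<Sum>i<N. \<bar>x i\<bar> * \<bar>g i\<bar>) / A \<le> C"
          unfolding C_def by (simp add: sum_divide_distrib)
        then show ?thesis using A0 unfolding A_def[symmetric] by (simp add: divide_le_eq mult.commute)
      qed
      finally show "(\<Sum>i<N. x i * g i) \<le> C * (\<Sum>i<N. \<bar>x i\<bar> powr \<sigma>) powr (1 / \<sigma>)"
        unfolding As_def .
    qed
  next
    assume "\<exists>C>0. \<forall>N x. (\<forall>i. \<bar>x i\<bar> \<le> 1) \<longrightarrow>
               (\<Sum>i<N. x i * g i) \<le> C * (\<Sum>i<N. \<bar>x i\<bar> powr \<sigma>) powr (1 / \<sigma>)"
    then obtain C where C: "\<And>N x. (\<forall>i. \<bar>x i\<bar> \<le> 1) \<Longrightarrow>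
               (\<Sum>i<N. x i * g i) \<le> C * (\<Sum>i<N. \<bar>x i\<bar> powr \<sigma>) powr (1 / \<sigma>)" and C0: "C > 0" by blast
    have hom: "(\<Sum>i<N. x i * g i) \<le> C * (\<Sum>i<N. \<bar>x i\<bar> powr \<sigma>) powr (1 / \<sigma>)" for N x
    proof -
      define \<mu> where "\<mu> = 1 + (\<Sum>i<N. \<bar>x i\<bar>)"
      have mu0: "0 < \<mu>" unfolding \<mu>_def by (simp add: add_pos_nonneg sum_nonneg)
      define y where "y i = (if i < N then x i / \<mu> else 0)" for i
      have yb: "\<forall>i. \<bar>y i\<bar> \<le> 1"
      proof
        fix i
        show "\<bar>y i\<bar> \<le> 1"
        proof (cases "i < N")
          case True
          have "\<bar>x i\<bar> \<le> (\<Sum>i<N. \<bar>x i\<bar>)" using True by (intro member_le_sum) auto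
          then have "\<bar>x i\<bar> \<le> \<mu>" unfolding \<mu>_def by simp
          then show ?thesis using True mu0 by (simp add: y_def abs_divide)
        qed (simp add: y_def)
      qed
      have l: "(\<Sum>i<N. y i * g i) = (\<Sum>i<N. x i * g i) / \<mu>"
        by (simp add: y_def sum_divide_distrib)
      have r: "(\<Sum>i<N. \<bar>y i\<bar> powr \<sigma>) powr (1 / \<sigma>) = (\<Sum>i<N. \<bar>x i\<bar> powr \<sigma>) powr (1 / \<sigma>) / \<mu>"
      proof -
        have "(\<Sum>i<N. \<bar>y i\<bar> powr \<sigma>) = (\<Sum>i<N. \<bar>x i\<bar> powr \<sigma>) / \<mu> powr \<sigma>"
          using mu0 by (simp add: y_def sum_divide_distrib abs_divide powr_divide)
        then show ?thesis using mu0 sig1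
          by (simp add: powr_divide powr_powr sum_nonneg)
      qed
      have "(\<Sum>i<N. x i * g i) / \<mu> \<le> C * ((\<Sum>i<N. \<bar>x i\<bar> powr \<sigma>) powr (1 / \<sigma>) / \<mu>)"
        using C[OF yb, of N] unfolding l r .
      then show ?thesis using mu0 by (simp add: divide_le_eq field_simps)
    qed
    have bd: "(\<Sum>i<N. \<bar>g i\<bar> powr S) \<le> C powr S" for N
    proof -
      define T where "T = (\<Sum>i<N. \<bar>g i\<bar> powr S)"
      have T0: "0 \<le> T" unfolding T_def by (intro sum_nonneg) simp
      define x where "x i = sgn (g i) * \<bar>g i\<bar> powr (S - 1)" for i
      have xg: "x i * g i = \<bar>g i\<bar> powr S" for i
      proof -
        have "x i * g i = \<bar>g i\<bar> powr (S - 1) * \<bar>g i\<bar>"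
          unfolding x_def by (simp add: sgn_mult_self_eq mult_ac abs_sgn)
        also have "\<dots> = \<bar>g i\<bar> powr (S - 1) * \<bar>g i\<bar> powr 1" by simp
        also have "\<dots> = \<bar>g i\<bar> powr (S - 1 + 1)" by (subst powr_add) (rule refl)
        also have "\<dots> = \<bar>g i\<bar> powr S" by simp
        finally show ?thesis .
      qed
      have xs: "\<bar>x i\<bar> powr \<sigma> = \<bar>g i\<bar> powr S" for i
        unfolding x_def using Ssig by (simp add: abs_mult powr_powr abs_sgn_eq)
      have "T \<le> C * T powr (1 / \<sigma>)"
        using hom[where N = N and x = x] unfolding T_def xg xs .
      show ?thesis
      proof (cases "T = 0")
        case True then show ?thesis unfolding T_def[symmetric] by simp
      next
        case False
        then have Tp: "0 < T" using T0 by simp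
        have "T = T powr (1 / \<sigma>) * T powr (1 / S)"
          using Tp conj by (simp add: powr_add[symmetric])
        with \<open>T \<le> C * T powr (1 / \<sigma>)\<close> have "T powr (1 / \<sigma>) * T powr (1 / S) \<le> T powr (1 / \<sigma>) * C"
          by (simp add: mult.commute)
        then have "T powr (1 / S) \<le> C" using Tp by simp
        then have "(T powr (1 / S)) powr S \<le> C powr S" using S by (intro powr_mono2) auto
        then show ?thesis unfolding T_def[symmetric] using Tp S by (simp add: powr_powr)
      qed
    qed
    have "summable (\<lambda>n. \<bar>g n\<bar> powr S)"
      by (rule summableI_nonneg_bounded[OF _ bd]) simp
    then show "g \<in> lspace (ereal S)" by (simp add: lspace_def)
  qed
qed




theorem proposition5p1:
  fixes r p :: real and q :: ereal
    and T :: "(real \<Rightarrow> real) \<Rightarrow> nat \<Rightarrow> real"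
  assumes r: "1 < r" "r \<le> 2"
    and p: "r \<le> p"
    and q: "1 < q"
    and T_into: "\<forall>f \<in> Lp p. T f \<in> lspace q"
    and T_add: "\<forall>f \<in> Lp p. \<forall>g \<in> Lp p. T (\<lambda>x. f x + g x) = (\<lambda>i. T f i + T g i)"
    and T_scale: "\<forall>f \<in> Lp p. \<forall>c. T (\<lambda>x. c * f x) = (\<lambda>i. c * T f i)"
    and T_bounded: "\<exists>K. \<forall>f \<in> Lp p. lnorm q (T f) \<le> K * Lp_norm p f"
    and T_nontrivial: "\<exists>f \<in> Lp p. T f \<noteq> (\<lambda>i. 0)"
  shows
   "((\<exists>g \<in> lspace (s_exp (conj_exp (ereal r)) q).
        \<forall>f \<in> Lp p. T f = (\<lambda>i. g i * fourier f i))
     \<longleftrightarrow>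
     ((\<forall>n i. i \<noteq> n \<longrightarrow> T (trig n) i = 0) \<and>
      (\<lambda>i. T (trig i) i) \<in> lspace (s_exp (conj_exp (ereal r)) q)))
   \<and>
    (((\<forall>n i. i \<noteq> n \<longrightarrow> T (trig n) i = 0) \<and>
      (\<lambda>i. T (trig i) i) \<in> lspace (s_exp (conj_exp (ereal r)) q))
     \<longleftrightarrow>
     (\<exists>C > 0. \<forall>n m. \<forall>R :: nat \<Rightarrow> nat \<Rightarrow> real. (\<forall>i j. \<bar>R i j\<bar> \<le> 1) \<longrightarrow>
        (\<Sum>i<n. \<Sum>j<m. R i j * T (trig j) i)
          \<le> C * (\<Sum>i<min n m. \<bar>R i i\<bar> powr real_of_ereal (conj_exp (s_exp (conj_exp (ereal r)) q)))
                 powr (1 / real_of_ereal (conj_exp (s_exp (conj_exp (ereal r)) q)))))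
   \<and>
    (conj_exp (ereal r) \<le> q \<longrightarrow>
     ((\<exists>C > 0. \<forall>n m. \<forall>R :: nat \<Rightarrow> nat \<Rightarrow> real. (\<forall>i j. \<bar>R i j\<bar> \<le> 1) \<longrightarrow>
        (\<Sum>i<n. \<Sum>j<m. R i j * T (trig j) i)
          \<le> C * (\<Sum>i<min n m. \<bar>R i i\<bar> powr real_of_ereal (conj_exp (s_exp (conj_exp (ereal r)) q)))
                 powr (1 / real_of_ereal (conj_exp (s_exp (conj_exp (ereal r)) q))))
      \<longleftrightarrow>
      (\<exists>C > 0. \<forall>n m. \<forall>R :: nat \<Rightarrow> real. (\<forall>j. \<bar>R j\<bar> \<le> 1) \<longrightarrow>
        (n < m \<longrightarrow> (\<Sum>j<m. R j * T (trig j) n) \<le> C * \<bar>R n\<bar>) \<and>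
        (m \<le> n \<longrightarrow> (\<Sum>j<m. R j * T (trig j) n) \<le> 0))))"
proof -
  define rr where "rr = r / (r - 1)"
  have r'eq: "conj_exp (ereal r) = ereal rr" using r by (simp add: conj_exp_def rr_def)
  have rr1: "1 < rr" using r by (simp add: rr_def field_simps)
  define s where "s = s_exp (conj_exp (ereal r)) q"
  define \<sigma> where "\<sigma> = real_of_ereal (conj_exp s)"
  have key: "0 < \<sigma> \<and> (\<forall>g. g \<in> lspace s \<longleftrightarrow> (\<exists>C>0. \<forall>N x. (\<forall>i. \<bar>x i\<bar> \<le> 1) \<longrightarrow>
               (\<Sum>i<N. x i * g i) \<le> C * (\<Sum>i<N. \<bar>x i\<bar> powr \<sigma>) powr (1 / \<sigma>)))
     \<and> (conj_exp (ereal r) \<le> q \<longrightarrow> \<sigma> = 1)"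
  proof (cases "q < ereal rr")
    case True
    obtain Q where qQ: "q = ereal Q" using True q by (cases q) auto
    have Q1: "1 < Q" and Qr: "Q < rr" using q True qQ by auto
    define S where "S = rr * Q / (rr - Q)"
    have S1: "1 < S"
    proof -
      have "rr - Q < rr * Q" using rr1 Q1 by (smt (verit) mult_less_cancel_left1)
      then show ?thesis unfolding S_def using Qr by (simp add: field_simps)
    qed
    have seq: "s = ereal S" unfolding s_def s_exp_def r'eq qQ S_def using Q1 Qr by simp
    have sig: "\<sigma> = S / (S - 1)" unfolding \<sigma>_def seq conj_exp_def using S1 by simp
    have sig0: "0 < \<sigma>" unfolding sig using S1 by simp
    show ?thesis using sig0 HD_fin[OF S1 sig] True r'eq unfolding seq by auto
  next
    case False
    have seq: "s = \<infinity>" unfolding s_def s_exp_def r'eq using False by auto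
    have sig: "\<sigma> = 1" unfolding \<sigma>_def seq conj_exp_def by simp
    show ?thesis using HD_inf unfolding seq sig by auto
  qed
  have p1: "1 \<le> p" using r p by simp
  note AB = ab_part[OF p1 q T_into T_add T_scale T_bounded, of "lspace s"]
  have HD: "\<And>g. g \<in> lspace s \<longleftrightarrow> (\<exists>C>0. \<forall>N x. (\<forall>i. \<bar>x i\<bar> \<le> 1) \<longrightarrow>
               (\<Sum>i<N. x i * g i) \<le> C * (\<Sum>i<N. \<bar>x i\<bar> powr \<sigma>) powr (1 / \<sigma>))"
    using key by blast
  note BC = bc_part[of \<sigma> "lspace s" "\<lambda>i j. T (trig j) i", OF _ HD]
  have CD: "conj_exp (ereal r) \<le> q \<Longrightarrow>
     ((\<exists>C > 0. \<forall>n m. \<forall>R :: nat \<Rightarrow> nat \<Rightarrow> real. (\<forall>i j. \<bar>R i j\<bar> \<le> 1) \<longrightarrow>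
        (\<Sum>i<n. \<Sum>j<m. R i j * T (trig j) i)
          \<le> C * (\<Sum>i<min n m. \<bar>R i i\<bar> powr \<sigma>) powr (1 / \<sigma>))
      \<longleftrightarrow>
      (\<exists>C > 0. \<forall>n m. \<forall>R :: nat \<Rightarrow> real. (\<forall>j. \<bar>R j\<bar> \<le> 1) \<longrightarrow>
        (n < m \<longrightarrow> (\<Sum>j<m. R j * T (trig j) n) \<le> C * \<bar>R n\<bar>) \<and>
        (m \<le> n \<longrightarrow> (\<Sum>j<m. R j * T (trig j) n) \<le> 0)))"
  proof -
    assume "conj_exp (ereal r) \<le> q"
    then have "\<sigma> = 1" using key by blast
    then show ?thesis using cd_part[of "\<lambda>i j. T (trig j) i"] by simp
  qed
  show ?thesis
    unfolding s_def[symmetric] \<sigma>_def[symmetric]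
    using AB BC key CD by blast
qed


end
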